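(* There exists a constant $C>0$ such that for all $t,s\in(0,1)$ and all integers $j_1\le j_2$ with $j_2\ge0$, both quantities \[\sum_{k_1\in\mathbb{Z}}\sum_{k_2\in\mathbb{Z}_{j_2}[t,s]}L_{j_1,j_2}^{k_1,k_2}\Big|\int_{-\infty}^{\min\{s,t\}}\psi_{H_1}(2^{j_1}x-k_1)\psi_{H_2}(2^{j_2}x-k_2)dx\Big|\] and \[\sum_{k_1\in\mathbb{Z}}\sum_{k_2\in\mathbb{Z}_{j_2}[t,s]}L_{j_1,j_2}^{k_1,k_2}\Big|\int_{\max\{s,t\}}^{+\infty}\psi_{H_1}(2^{j_1}x-k_1)\psi_{H_2}(2^{j_2}x-k_2)dx\Big|\] are bounded above by $C\sqrt{\log(3+|j_1|+2^{j_2})}\sqrt{\log(3+|j_2|+2^{j_2})}\,2^{-j_2}$.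
   Context: Fix $H_1,H_2\in(\tfrac12,1)$ with $H_1+H_2>\tfrac32$. Let $\psi$ be the Meyer wavelet (Schwartz, $\widehat\psi$ compactly supported away from $0$, generating an orthonormal wavelet basis of $L^2(\mathbb{R})$). For $H\in(\tfrac12,1)$, $\psi_H$ is defined by $\widehat{\psi_H}(0)=0$, $\widehat{\psi_H}(\xi)=(i\xi)^{-(H-\frac12)}\widehat\psi(\xi)$ ($\xi\neq0$); equivalently $\psi_H(t)=\frac{1}{\Gamma(H-\frac12)}\int_{\mathbb{R}}(t-x)_+^{H-\frac32}\psi(x)dx$. Set $L_{j_1,j_2}^{k_1,k_2}=\sqrt{\log(3+|j_1|+|k_1|)}\sqrt{\log(3+|j_2|+|k_2|)}$ and $\mathbb{Z}_{j}[t,s]=\{k\in\mathbb{Z}:\min\{t,s\}\le k2^{-j}\le\max\{t,s\}\}$. *)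

theory Defs
  imports "HOL-Analysis.Analysis"
begin

definition fourier :: "(real \<Rightarrow> real) \<Rightarrow> real \<Rightarrow> complex" where
  "fourier f \<xi> = (LINT x|lborel. complex_of_real (f x) * cis (- \<xi> * x))"

definition schwartz :: "(real \<Rightarrow> real) \<Rightarrow> bool" where
  "schwartz f \<longleftrightarrow>
     (\<forall>n x. ((deriv ^^ n) f) differentiable (at x)) \<and>
     (\<forall>m n. \<exists>B. \<forall>x. \<bar>x\<bar> ^ m * \<bar>(deriv ^^ n) f x\<bar> \<le> B)"

definition wav :: "(real \<Rightarrow> real) \<Rightarrow> int \<Rightarrow> int \<Rightarrow> real \<Rightarrow> real" where
  "wav \<psi> j k x = 2 powr (real_of_int j / 2) * \<psi> (2 powr real_of_int j * x - real_of_int k)"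

definition wavelet_onb :: "(real \<Rightarrow> real) \<Rightarrow> bool" where
  "wavelet_onb \<psi> \<longleftrightarrow>
     (\<forall>j k j' k'. integrable lborel (\<lambda>x. wav \<psi> j k x * wav \<psi> j' k' x) \<and>
        (LINT x|lborel. wav \<psi> j k x * wav \<psi> j' k' x) = (if j = j' \<and> k = k' then 1 else 0)) \<and>
     (\<forall>f. f \<in> borel_measurable lborel \<and> integrable lborel (\<lambda>x. (f x)\<^sup>2) \<and>
        (\<forall>j k. (LINT x|lborel. f x * wav \<psi> j k x) = 0) \<longrightarrow> (AE x in lborel. f x = 0))"

definition meyer_type_wavelet :: "(real \<Rightarrow> real) \<Rightarrow> bool" where
  "meyer_type_wavelet \<psi> \<longleftrightarrow> schwartz \<psi> \<and>
     (\<exists>a b. 0 < a \<and> a < b \<and> (\<forall>\<xi>. (\<bar>\<xi>\<bar> < a \<or> b < \<bar>\<xi>\<bar>) \<longrightarrow> fourier \<psi> \<xi> = 0)) \<and>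
     wavelet_onb \<psi>"

definition psiH :: "real \<Rightarrow> (real \<Rightarrow> real) \<Rightarrow> real \<Rightarrow> real" where
  "psiH H \<psi> t = (1 / Gamma (H - 1/2)) *
     (LINT x|lborel. (if x < t then (t - x) powr (H - 3/2) else 0) * \<psi> x)"

definition Lweight :: "int \<Rightarrow> int \<Rightarrow> int \<Rightarrow> int \<Rightarrow> real" where
  "Lweight j1 j2 k1 k2 = sqrt (ln (3 + \<bar>real_of_int j1\<bar> + \<bar>real_of_int k1\<bar>)) *
                         sqrt (ln (3 + \<bar>real_of_int j2\<bar> + \<bar>real_of_int k2\<bar>))"

definition Zset :: "int \<Rightarrow> real \<Rightarrow> real \<Rightarrow> int set" where
  "Zset j t s = {k. min t s \<le> real_of_int k * 2 powr (- real_of_int j) \<and>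
                    real_of_int k * 2 powr (- real_of_int j) \<le> max t s}"

definition prodH :: "real \<Rightarrow> real \<Rightarrow> (real \<Rightarrow> real) \<Rightarrow> int \<Rightarrow> int \<Rightarrow> int \<Rightarrow> int \<Rightarrow> real \<Rightarrow> real" where
  "prodH H1 H2 \<psi> j1 j2 k1 k2 x =
     psiH H1 \<psi> (2 powr real_of_int j1 * x - real_of_int k1) *
     psiH H2 \<psi> (2 powr real_of_int j2 * x - real_of_int k2)"

end

theory Submission
  imports Defs "HOL-Real_Asymp.Real_Asymp"
begin

lemma hk2lb:
  fixes f :: "real \<Rightarrow> real"
  assumes meas: "f \<in> borel_measurable borel" and S: "S \<in> sets borel"
    and nn: "\<And>x. x \<in> S \<Longrightarrow> 0 \<le> f x" and hi: "(f has_integral I) S"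
  shows "set_integrable lborel S f \<and> (LINT x:S|lborel. f x) = I"
proof -
  have ai: "f absolutely_integrable_on S"
    using nonnegative_absolutely_integrable_1[of f S] hi nn by (auto simp: has_integral_integrable)
  have m: "(\<lambda>x. indicator S x *\<^sub>R f x) \<in> borel_measurable lborel"
    using meas S by measurable
  have "integrable lebesgue (\<lambda>x. indicator S x *\<^sub>R f x)"
    using ai unfolding set_integrable_def .
  hence si: "set_integrable lborel S f"
    unfolding set_integrable_def using integrable_completion[OF m] by simp
  have "set_lebesgue_integral lebesgue S f = integral S f"
    using set_lebesgue_integral_eq_integral(2)[OF ai] .
  moreover have "set_lebesgue_integral lebesgue S f = set_lebesgue_integral lborel S f"
    unfolding set_lebesgue_integral_def using integral_completion[OF m] by simp
  ultimately show ?thesis using si hi integral_unique by auto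
qed

lemma hk_up:
  fixes b q r c :: real
  assumes b: "b > 0" and q: "q > 0" and r: "r > 1"
  shows "((\<lambda>x. (q + b*(x-c)) powr (-r)) has_integral (q powr (1-r) / (b*(r-1)))) {c..}"
proof (rule has_integral_to_inf)
  define F where "F \<equiv> \<lambda>x. - ((q + b*(x-c)) powr (1-r)) / (b*(r-1))"
  have der: "((\<lambda>x. (q + b*(x-c)) powr (-r)) has_integral (F y - F c)) {c..y}" if "y \<ge> c" for y
  proof (intro fundamental_theorem_of_calculus that)
    fix x assume x: "x \<in> {c..y}"
    have pos: "0 < q + b*(x-c)" using x b q by (simp add: add_pos_nonneg)
    have "((\<lambda>x. - ((q + b*(x-c)) powr (1-r)) / (b*(r-1))) has_real_derivative
       (- ((1-r) * (q + b*(x-c)) powr (1-r-1) * b) / (b*(r-1)))) (at x within {c..y})"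
      using pos r by (auto intro!: derivative_eq_intros)
    moreover have "- ((1-r) * (q + b*(x-c)) powr (1-r-1) * b) / (b*(r-1)) = (q + b*(x-c)) powr (-r)"
    proof -
      have r1: "r - 1 \<noteq> 0" using r by simp
      show ?thesis using b r1 pos by (simp add: field_simps powr_diff powr_minus)
    qed
    ultimately show "(F has_vector_derivative (q + b*(x-c)) powr (-r)) (at x within {c..y})"
      unfolding F_def by (simp add: has_real_derivative_iff_has_vector_derivative)
  qed
  show "(\<lambda>x. (q + b*(x-c)) powr (-r)) integrable_on {c..y}" for y
    by (cases "c \<le> y") (use der in \<open>auto simp: has_integral_integrable\<close>)
  show "\<And>y. c \<le> y \<Longrightarrow> 0 \<le> (q + b*(y-c)) powr (-r)" by simp
  have "\<forall>\<^sub>F y in at_top. integral {c..y} (\<lambda>x. (q + b*(x-c)) powr (-r)) = F y - F c"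
    using der by (meson eventually_at_top_linorderI integral_unique)
  moreover have "((\<lambda>y::real. F y - F c) \<longlongrightarrow> q powr (1-r) / (b*(r-1))) at_top"
    using assms unfolding F_def by real_asymp
  ultimately show "((\<lambda>y. integral {c..y} (\<lambda>x. (q + b*(x-c)) powr (-r))) \<longlongrightarrow> q powr (1-r) / (b*(r-1))) at_top"
    by (simp add: filterlim_cong)
qed
lemma lb_up:
  fixes b q r c :: real
  assumes b: "b > 0" and q: "q > 0" and r: "r > 1"
  shows "set_integrable lborel {c..} (\<lambda>x. (q + b*(x-c)) powr (-r)) \<and>
         (LINT x:{c..}|lborel. (q + b*(x-c)) powr (-r)) = q powr (1-r) / (b*(r-1))"
  by (rule hk2lb[OF _ _ _ hk_up[OF assms]]) auto

lemma lb_down: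
  fixes b q r c :: real
  assumes b: "b > 0" and q: "q > 0" and r: "r > 1"
  shows "set_integrable lborel {..c} (\<lambda>x. (q + b*(c-x)) powr (-r)) \<and>
         (LINT x:{..c}|lborel. (q + b*(c-x)) powr (-r)) = q powr (1-r) / (b*(r-1))"
proof -
  define g where "g = (\<lambda>x::real. indicator {..c} x *\<^sub>R (q + b*(c-x)) powr (-r))"
  have eq: "(\<lambda>x. g (0 + (-1) * x)) = (\<lambda>x. indicator {-c..} x *\<^sub>R (q + b*(x-(-c))) powr (-r))"
    by (auto simp: g_def indicator_def algebra_simps fun_eq_iff)
  have up: "set_integrable lborel {-c..} (\<lambda>x. (q + b*(x-(-c))) powr (-r))"
     "(LINT x:{-c..}|lborel. (q + b*(x-(-c))) powr (-r)) = q powr (1-r) / (b*(r-1))"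
    using lb_up[OF assms, of "-c"] by auto
  have "integrable lborel g"
    using up(1) lborel_integrable_real_affine_iff[of "-1" g 0] eq unfolding set_integrable_def by simp
  moreover have "integral\<^sup>L lborel g = q powr (1-r) / (b*(r-1))"
    using lborel_integral_real_affine[of "-1" g 0] eq up(2) unfolding set_lebesgue_integral_def by simp
  ultimately show ?thesis unfolding set_integrable_def set_lebesgue_integral_def g_def by simp
qed

lemma lb_abs:
  fixes r :: real assumes r: "r > 1"
  shows "integrable lborel (\<lambda>x. (1 + \<bar>x\<bar>) powr (-r))"
proof -
  have a: "set_integrable lborel {0..} (\<lambda>x. (1 + \<bar>x\<bar>) powr (-r))"
  proof -
    have "set_integrable lborel {0..} (\<lambda>x. (1 + 1*(x-0)) powr (-r))" using lb_up[of 1 1 r 0] r by simp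
    thus ?thesis by (rule set_integrable_cong[THEN iffD1, rotated -1]) auto
  qed
  have b: "set_integrable lborel {..0} (\<lambda>x. (1 + \<bar>x\<bar>) powr (-r))"
  proof -
    have "set_integrable lborel {..0} (\<lambda>x. (1 + 1*(0-x)) powr (-r))" using lb_down[of 1 1 r 0] r by simp
    thus ?thesis by (rule set_integrable_cong[THEN iffD1, rotated -1]) auto
  qed
  have "set_integrable lborel ({..0} \<union> {0..}) (\<lambda>x. (1 + \<bar>x\<bar>) powr (-r))"
    by (rule set_integrable_Un[OF b a]) auto
  moreover have "{..0} \<union> {0..} = (UNIV::real set)" by auto
  ultimately show ?thesis by (simp add: set_integrable_def)
qed

lemma lb_abs_affine:
  fixes r b k :: real assumes r: "r > 1" and b: "b \<noteq> 0"
  shows "integrable lborel (\<lambda>x. (1 + \<bar>b*x - k\<bar>) powr (-r))"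
  using lborel_integrable_real_affine_iff[of b "\<lambda>x. (1 + \<bar>x\<bar>) powr (-r)" "-k"] lb_abs[OF r] b
  by (simp add: algebra_simps)

lemma tele:
  fixes r u :: real assumes r: "r > 1" and u: "u > 0"
  shows "(r-1) * (u+1) powr (-r) \<le> u powr (1-r) - (u+1) powr (1-r)"
proof -
  have "\<exists>z. u < z \<and> z < u+1 \<and> (u+1) powr (1-r) - u powr (1-r) = ((u+1) - u) * ((1-r) * z powr (1-r-1))"
    apply (rule MVT2) using u by (auto intro!: derivative_eq_intros)
  then obtain z where z: "u < z" "z < u+1" "(u+1) powr (1-r) - u powr (1-r) = (1-r) * z powr (-r)"
    by (auto simp: algebra_simps)
  have "(u+1) powr (-r) \<le> z powr (-r)"
    using z u r by (intro powr_mono2') auto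
  hence "(r-1) * (u+1) powr (-r) \<le> (r-1) * z powr (-r)" using r by simp
  thus ?thesis using z(3) by (simp add: algebra_simps)
qed

lemma sum_nat_tail:
  fixes r v :: real assumes r: "r > 1" and v: "v \<ge> 0"
  shows "(\<Sum>i<N. (1+v+real i) powr (-r)) \<le> (r/(r-1)) * (1+v) powr (1-r)"
proof -
  have main: "(\<Sum>i<Suc n. (1+v+real i) powr (-r)) \<le> (1+v) powr (-r) + ((1+v) powr (1-r) - (v + real (Suc n)) powr (1-r))/(r-1)" for n
  proof (induction n)
    case 0 then show ?case by (simp add: add.commute)
  next
    case (Suc n)
    have "(r-1) * ((v+real (Suc n))+1) powr (-r) \<le> (v+real (Suc n)) powr (1-r) - ((v+real (Suc n))+1) powr (1-r)"
      using v by (intro tele r) auto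
    hence "(1+v+real (Suc n)) powr (-r) \<le> ((v+real (Suc n)) powr (1-r) - (v+real (Suc (Suc n))) powr (1-r))/(r-1)"
      using r by (simp add: field_simps)
    define A where "A = (1+v) powr (1-r)"
    define X where "X = (v + real (Suc n)) powr (1-r)"
    define Y where "Y = (v + real (Suc (Suc n))) powr (1-r)"
    have "(\<Sum>i<Suc (Suc n). (1+v+real i) powr (-r)) = (\<Sum>i<Suc n. (1+v+real i) powr (-r)) + (1+v+real (Suc n)) powr (-r)"
      by simp
    also have "\<dots> \<le> ((1+v) powr (-r) + (A - X)/(r-1)) + (X - Y)/(r-1)"
      using Suc.IH \<open>(1+v+real (Suc n)) powr (-r) \<le> _\<close> unfolding A_def X_def Y_def by (rule add_mono)
    also have "\<dots> = (1+v) powr (-r) + (A - Y)/(r-1)" by (simp add: diff_divide_distrib)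
    finally show ?case unfolding A_def Y_def .
  qed
  have b1: "(1+v) powr (-r) \<le> (1+v) powr (1-r)" using v r by (intro powr_mono) auto
  show ?thesis
  proof (cases N)
    case 0 then show ?thesis using r v by simp
  next
    case (Suc n)
    have "(\<Sum>i<N. (1+v+real i) powr (-r)) \<le> (1+v) powr (1-r) + (1+v) powr (1-r)/(r-1)"
      using main[of n] b1 r Suc by (smt (verit, ccfv_SIG) divide_right_mono powr_ge_zero)
    also have "\<dots> = (r/(r-1)) * (1+v) powr (1-r)" using r by (simp add: field_simps)
    finally show ?thesis .
  qed
qed

lemma sum_inj_bound:
  fixes F :: "'a set" and \<phi> :: "'a \<Rightarrow> nat" and E :: "'a \<Rightarrow> real"
  assumes fin: "finite F" and inj: "inj_on \<phi> F" and r: "r > 1" and v: "v \<ge> 0"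
    and E: "\<And>k. k \<in> F \<Longrightarrow> E k \<ge> v + real (\<phi> k)"
  shows "(\<Sum>k\<in>F. (1 + E k) powr (-r)) \<le> (r/(r-1)) * (1+v) powr (1-r)"
proof -
  obtain N where N: "\<phi> ` F \<subseteq> {..<N}"
    using fin by (metis finite_imageI finite_nat_iff_bounded)
  have "(\<Sum>k\<in>F. (1 + E k) powr (-r)) \<le> (\<Sum>k\<in>F. (1 + v + real (\<phi> k)) powr (-r))"
  proof (rule sum_mono)
    fix k assume k: "k \<in> F"
    show "(1 + E k) powr (-r) \<le> (1 + v + real (\<phi> k)) powr (-r)"
      using E[OF k] v r by (intro powr_mono2') auto
  qed
  also have "\<dots> = (\<Sum>i\<in>\<phi> ` F. (1 + v + real i) powr (-r))"
    using sum.reindex[OF inj, of "\<lambda>i. (1 + v + real i) powr (-r)"] by simp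
  also have "\<dots> \<le> (\<Sum>i<N. (1 + v + real i) powr (-r))"
    by (rule sum_mono2) (use N in auto)
  also have "\<dots> \<le> (r/(r-1)) * (1+v) powr (1-r)" by (rule sum_nat_tail[OF r v])
  finally show ?thesis .
qed

lemma sum_int_bound:
  fixes F :: "int set" and z r :: real
  assumes fin: "finite F" and r: "r > 1"
  shows "(\<Sum>k\<in>F. (1 + \<bar>z - real_of_int k\<bar>) powr (-r)) \<le> 2 * (r/(r-1))"
proof -
  define F1 where "F1 = {k\<in>F. k \<ge> \<lceil>z\<rceil>}"
  define F2 where "F2 = {k\<in>F. k < \<lceil>z\<rceil>}"
  have F: "F = F1 \<union> F2" "F1 \<inter> F2 = {}" by (auto simp: F1_def F2_def)
  have f12: "finite F1" "finite F2" using fin by (auto simp: F1_def F2_def)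
  have s1: "(\<Sum>k\<in>F1. (1 + \<bar>z - real_of_int k\<bar>) powr (-r)) \<le> (r/(r-1)) * (1+0) powr (1-r)"
  proof (rule sum_inj_bound[OF f12(1) _ r, of "\<lambda>k. nat (k - \<lceil>z\<rceil>)"])
    show "inj_on (\<lambda>k. nat (k - \<lceil>z\<rceil>)) F1" by (auto simp: F1_def inj_on_def)
    fix k assume "k \<in> F1"
    hence "k \<ge> \<lceil>z\<rceil>" by (simp add: F1_def)
    hence "real_of_int \<lceil>z\<rceil> \<le> real_of_int k" by simp
    moreover have "z \<le> \<lceil>z\<rceil>" by (rule le_of_int_ceiling)
    moreover have "real (nat (k - \<lceil>z\<rceil>)) = real_of_int k - real_of_int \<lceil>z\<rceil>" using \<open>k \<ge> \<lceil>z\<rceil>\<close> by simp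
    ultimately show "0 + real (nat (k - \<lceil>z\<rceil>)) \<le> \<bar>z - real_of_int k\<bar>" by linarith
  qed simp
  have s2: "(\<Sum>k\<in>F2. (1 + \<bar>z - real_of_int k\<bar>) powr (-r)) \<le> (r/(r-1)) * (1+0) powr (1-r)"
  proof (rule sum_inj_bound[OF f12(2) _ r, of "\<lambda>k. nat (\<lceil>z\<rceil> - 1 - k)"])
    show "inj_on (\<lambda>k. nat (\<lceil>z\<rceil> - 1 - k)) F2" by (auto simp: F2_def inj_on_def)
    fix k assume "k \<in> F2"
    hence "k \<le> \<lceil>z\<rceil> - 1" by (simp add: F2_def)
    moreover have "\<lceil>z\<rceil> - 1 < z" by linarith
    ultimately show "0 + real (nat (\<lceil>z\<rceil> - 1 - k)) \<le> \<bar>z - real_of_int k\<bar>" by simp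
  qed simp
  show ?thesis using s1 s2 sum.union_disjoint[OF f12 F(2), of "\<lambda>k. (1 + \<bar>z - real_of_int k\<bar>) powr (-r)"] F(1)
    by simp
qed

lemma ln_sqrt_bound: fixes u :: real assumes "0 \<le> u" shows "1 + ln (1+u) \<le> 2 * (1+u) powr (1/2)"
proof -
  define w where "w = (1+u) powr (1/2)"
  have w: "1 \<le> w" unfolding w_def using assms by (simp add: ge_one_powr_ge_zero)
  have "ln (1+u) = ln (w powr 2)" unfolding w_def using assms by (simp only: powr_powr) (simp add: powr_one_gt_zero_iff)
  also have "\<dots> = 2 * ln w" using w by (simp only: ln_powr)
  also have "\<dots> \<le> 2 * (w - 1)" using w ln_le_minus_one[of w] by simp
  finally show ?thesis unfolding w_def by simp
qed

lemma weight_bound: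
  fixes a b x z :: real and J :: real and k :: int
  assumes a: "0 < a" "a \<le> b" and b: "1 \<le> b" and J: "0 \<le> J"
  shows "sqrt (ln (3 + J + \<bar>real_of_int k\<bar>)) \<le>
     2 * sqrt (ln (3 + J + b)) * (1+\<bar>x\<bar>) powr (1/4) * (1 + \<bar>a*x - real_of_int k\<bar>) powr (1/4)"
proof -
  define d where "d = \<bar>a*x - real_of_int k\<bar>"
  define L where "L = ln (3 + J + b)"
  have d: "0 \<le> d" unfolding d_def by simp
  have L: "1 \<le> L"
  proof -
    have "exp 1 \<le> (3::real)" using exp_le by simp
    also have "\<dots> \<le> 3 + J + b" using J b by simp
    finally show ?thesis unfolding L_def using b J by (simp add: ln_ge_iff)
  qed
  have k: "\<bar>real_of_int k\<bar> \<le> b * \<bar>x\<bar> + d"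
  proof -
    have "\<bar>real_of_int k\<bar> \<le> \<bar>a*x\<bar> + d" unfolding d_def by linarith
    moreover have "\<bar>a*x\<bar> \<le> b * \<bar>x\<bar>" using a by (simp add: abs_mult mult_right_mono)
    ultimately show ?thesis by linarith
  qed
  have prod: "3 + J + \<bar>real_of_int k\<bar> \<le> (3 + J + b) * (1+\<bar>x\<bar>) * (1+d)"
  proof -
    have "(3 + J + b) * (1+\<bar>x\<bar>) * (1+d) = (3 + J + b) * (1+\<bar>x\<bar>) + (3 + J + b) * (1+\<bar>x\<bar>) * d"
      by (simp add: algebra_simps)
    moreover have "(3 + J + b) * (1+\<bar>x\<bar>) \<ge> 3 + J + b * \<bar>x\<bar>"
      using J b by (simp add: algebra_simps)
    moreover have "(3 + J + b) * (1+\<bar>x\<bar>) * d \<ge> 1 * 1 * d"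
      using J b d by (intro mult_mono) auto
    ultimately show ?thesis using k by linarith
  qed
  have pos: "0 < 3 + J + \<bar>real_of_int k\<bar>" using J by simp
  have "ln (3 + J + \<bar>real_of_int k\<bar>) \<le> ln ((3 + J + b) * (1+\<bar>x\<bar>) * (1+d))"
    using prod pos by simp
  also have "\<dots> = L + ln (1+\<bar>x\<bar>) + ln (1+d)" unfolding L_def using J b d by (simp add: ln_mult)
  also have "\<dots> \<le> L * (1 + ln (1+\<bar>x\<bar>)) * (1 + ln (1+d))"
  proof -
    have p: "0 \<le> ln (1+\<bar>x\<bar>)" "0 \<le> ln (1+d)" using d by auto
    have "L * (1 + ln (1+\<bar>x\<bar>)) * (1 + ln (1+d)) = L + L * ln (1+\<bar>x\<bar>) + L * ln (1+d) + L * ln (1+\<bar>x\<bar>) * ln (1+d)"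
      by (simp add: algebra_simps)
    moreover have "ln (1+\<bar>x\<bar>) \<le> L * ln (1+\<bar>x\<bar>)" "ln (1+d) \<le> L * ln (1+d)" "0 \<le> L * ln (1+\<bar>x\<bar>) * ln (1+d)"
      using p L by (auto intro: mult_nonneg_nonneg) (simp_all add: mult_le_cancel_right1)
    ultimately show ?thesis by linarith
  qed
  also have "\<dots> \<le> L * (2 * (1+\<bar>x\<bar>) powr (1/2)) * (2 * (1+d) powr (1/2))"
    using ln_sqrt_bound[of "\<bar>x\<bar>"] ln_sqrt_bound[of d] d L
    by (intro mult_mono) (auto intro: add_nonneg_nonneg)
  finally have le: "ln (3 + J + \<bar>real_of_int k\<bar>) \<le> 4 * L * ((1+\<bar>x\<bar>) powr (1/2) * (1+d) powr (1/2))"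
    by (simp add: algebra_simps)
  have "sqrt (ln (3 + J + \<bar>real_of_int k\<bar>)) \<le> sqrt (4 * L * ((1+\<bar>x\<bar>) powr (1/2) * (1+d) powr (1/2)))"
    using le by simp
  also have "\<dots> = 2 * sqrt L * (sqrt ((1+\<bar>x\<bar>) powr (1/2)) * sqrt ((1+d) powr (1/2)))"
    by (simp add: real_sqrt_mult)
  also have "sqrt ((1+\<bar>x\<bar>) powr (1/2)) = (1+\<bar>x\<bar>) powr (1/4)"
    using powr_half_sqrt_powr[of _ "1/2"] by (simp add: powr_powr)
  also have "sqrt ((1+d) powr (1/2)) = (1+d) powr (1/4)"
    using powr_half_sqrt_powr[of "1+d" "1/2"] d by simp
  finally show ?thesis unfolding L_def d_def by (simp add: mult.assoc)
qed

lemma taylor_bound: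
  fixes e t x :: real
  assumes e: "e < 0" and t: "t > 0" and x: "x < t/2"
  shows "\<bar>(t-x) powr e - (t powr e - e * t powr (e-1) * x)\<bar> \<le> e*(e-1)/2 * (t/2) powr (e-2) * x^2"
proof (cases "x = 0")
  case True then show ?thesis using e by simp
next
  case False
  define diff where "diff = (\<lambda>m::nat. \<lambda>y::real. if m = 0 then (t-y) powr e else if m = 1 then -e*(t-y) powr (e-1) else e*(e-1)*(t-y) powr (e-2))"
  have D: "\<forall>m y. m < 2 \<and> min x 0 \<le> y \<and> y \<le> t/2 \<longrightarrow> DERIV (diff m) y :> diff (Suc m) y"
  proof (intro allI impI)
    fix m :: nat and y :: real assume a: "m < 2 \<and> min x 0 \<le> y \<and> y \<le> t/2"
    hence ty: "0 < t - y" using t by simp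
    show "DERIV (diff m) y :> diff (Suc m) y"
    proof (cases "m = 0")
      case True
      have "((\<lambda>y. (t-y) powr e) has_real_derivative (e * (t-y) powr (e-1) * (0 - 1))) (at y)"
        using ty by (auto intro!: derivative_eq_intros)
      thus ?thesis using True unfolding diff_def by (simp add: algebra_simps)
    next
      case False
      hence m1: "m = 1" using a by simp
      have "((\<lambda>y. -e*(t-y) powr (e-1)) has_real_derivative (-e * ((e-1) * (t-y) powr (e-1-1) * (0 - 1)))) (at y)"
        using ty by (auto intro!: derivative_eq_intros)
      moreover have "e-1-1 = e-2" by simp
      ultimately show ?thesis using m1 unfolding diff_def by (simp add: algebra_simps)
    qed
  qed
  obtain \<xi> where xi: "(if x < 0 then x < \<xi> \<and> \<xi> < 0 else 0 < \<xi> \<and> \<xi> < x)"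
     "(t-x) powr e = (\<Sum>m<2. diff m 0 / fact m * (x - 0)^m) + diff 2 \<xi> / fact 2 * (x - 0)^2"
    using Taylor[of 2 diff "\<lambda>y. (t-y) powr e" "min x 0" "t/2" 0 x] D False x t
    by (auto simp: diff_def)
  have xi2: "\<xi> < t/2" using xi(1) x t by (auto split: if_splits)
  have eq: "(t-x) powr e - (t powr e - e * t powr (e-1) * x) = e*(e-1)*(t-\<xi>) powr (e-2) / 2 * x^2"
    using xi(2) by (simp add: diff_def numeral_2_eq_2 lessThan_Suc)
  have "(t-\<xi>) powr (e-2) \<le> (t/2) powr (e-2)"
    using xi2 t e by (intro powr_mono2') auto
  moreover have "0 \<le> e*(e-1)" using e by (simp add: mult_nonpos_nonpos)
  ultimately have "e*(e-1)*(t-\<xi>) powr (e-2) \<le> e*(e-1)*(t/2) powr (e-2)" by (rule mult_left_mono)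
  hence "e*(e-1)*(t-\<xi>) powr (e-2) / 2 * x^2 \<le> e*(e-1)*(t/2) powr (e-2) / 2 * x^2"
    by (intro mult_right_mono divide_right_mono) auto
  moreover have "0 \<le> e*(e-1)*(t-\<xi>) powr (e-2) / 2 * x^2" using \<open>0 \<le> e*(e-1)\<close> by simp
  ultimately show ?thesis unfolding eq by simp
qed

context fixes \<psi> :: "real \<Rightarrow> real" assumes mw: "meyer_type_wavelet \<psi>"
begin

lemma psi_cont: "isCont \<psi> x"
proof -
  have "((deriv ^^ 0) \<psi>) differentiable (at x)" using mw unfolding meyer_type_wavelet_def schwartz_def by blast
  thus ?thesis by (simp add: differentiable_imp_continuous_within)
qed

lemma psi_con: "continuous_on UNIV \<psi>"
  by (simp add: continuous_at_imp_continuous_on psi_cont)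

lemma psi_meas: "\<psi> \<in> borel_measurable borel"
  by (rule borel_measurable_continuous_onI) (simp add: continuous_at_imp_continuous_on psi_cont)

lemma psi_decay: "\<exists>M>0. \<forall>x. \<bar>\<psi> x\<bar> \<le> M * (1 + \<bar>x\<bar>) powr (-6)"
proof -
  have sb: "\<forall>m. \<exists>B. \<forall>x. \<bar>x\<bar> ^ m * \<bar>\<psi> x\<bar> \<le> B"
    using mw unfolding meyer_type_wavelet_def schwartz_def by (metis funpow_0)
  obtain B0 where B0: "\<forall>x. \<bar>x\<bar> ^ 0 * \<bar>\<psi> x\<bar> \<le> B0" using sb by blast
  obtain B6 where B6: "\<forall>x. \<bar>x\<bar> ^ 6 * \<bar>\<psi> x\<bar> \<le> B6" using sb by blast
  define M where "M = 64 * (\<bar>B0\<bar> + \<bar>B6\<bar>) + 1"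
  have "\<bar>\<psi> x\<bar> \<le> M * (1 + \<bar>x\<bar>) powr (-6)" for x
  proof -
    have p: "(1 + \<bar>x\<bar>) ^ 6 \<le> 64 * (1 + \<bar>x\<bar> ^ 6)"
    proof (cases "\<bar>x\<bar> \<le> 1")
      case True
      have "(1 + \<bar>x\<bar>) ^ 6 \<le> 2 ^ 6" by (rule power_mono) (use True in auto)
      hence a: "(1 + \<bar>x\<bar>) ^ 6 \<le> 64" by simp
      have b: "(0::real) \<le> 64 * \<bar>x\<bar> ^ 6" by simp
      show ?thesis using a b by (simp only: distrib_left mult_1_right)
    next
      case False
      have "(1 + \<bar>x\<bar>) ^ 6 \<le> (2 * \<bar>x\<bar>) ^ 6" by (rule power_mono) (use False in auto)
      thus ?thesis by (simp add: power_mult_distrib)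
    qed
    have "(1 + \<bar>x\<bar>) ^ 6 * \<bar>\<psi> x\<bar> \<le> 64 * (1 + \<bar>x\<bar> ^ 6) * \<bar>\<psi> x\<bar>"
      using p by (simp add: mult_right_mono)
    also have "\<dots> = 64 * (\<bar>x\<bar> ^ 0 * \<bar>\<psi> x\<bar> + \<bar>x\<bar> ^ 6 * \<bar>\<psi> x\<bar>)" by (simp add: algebra_simps)
    also have "\<dots> \<le> 64 * (\<bar>B0\<bar> + \<bar>B6\<bar>)"
      using B6[rule_format, of x] B0[rule_format, of x] abs_ge_self[of B0] abs_ge_self[of B6]
      by (intro mult_left_mono add_mono) auto
    also have "\<dots> \<le> M" unfolding M_def by simp
    finally have bnd: "(1 + \<bar>x\<bar>) ^ 6 * \<bar>\<psi> x\<bar> \<le> M" .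
    have "(1 + \<bar>x\<bar>) powr (-6) = 1 / (1 + \<bar>x\<bar>) ^ 6"
      by (simp add: powr_minus powr_realpow divide_inverse)
    note eq = this
    have P: "0 < (1 + \<bar>x\<bar>) ^ 6" by simp
    have "\<bar>\<psi> x\<bar> = ((1 + \<bar>x\<bar>) ^ 6 * \<bar>\<psi> x\<bar>) / (1 + \<bar>x\<bar>) ^ 6" using P by simp
    also have "\<dots> \<le> M / (1 + \<bar>x\<bar>) ^ 6" by (rule divide_right_mono) (use bnd in auto)
    also have "\<dots> = M * (1 + \<bar>x\<bar>) powr (-6)" using eq by simp
    finally show ?thesis .
  qed
  moreover have "M > 0" unfolding M_def by simp
  ultimately show ?thesis by blast
qed

lemma fourier_zero: "\<exists>a>0. \<forall>\<xi>. \<bar>\<xi>\<bar> < a \<longrightarrow> fourier \<psi> \<xi> = 0"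
  using mw unfolding meyer_type_wavelet_def by auto

context fixes M :: real assumes Mpos: "M > 0" and Mb: "\<And>x. \<bar>\<psi> x\<bar> \<le> M * (1 + \<bar>x\<bar>) powr (-6)"
begin

lemma pow_int: assumes "n \<le> 4" shows "integrable lborel (\<lambda>x. \<bar>x\<bar> ^ n * \<bar>\<psi> x\<bar>)"
proof (rule Bochner_Integration.integrable_bound)
  show "integrable lborel (\<lambda>x. M * (1 + \<bar>x\<bar>) powr (- (6 - real n)))"
    using lb_abs[of "6 - real n"] assms by simp
  show "(\<lambda>x. \<bar>x\<bar> ^ n * \<bar>\<psi> x\<bar>) \<in> borel_measurable lborel"
    unfolding measurable_lborel2 by (intro borel_measurable_continuous_onI continuous_intros psi_con)
  show "AE x in lborel. norm (\<bar>x\<bar> ^ n * \<bar>\<psi> x\<bar>) \<le> norm (M * (1 + \<bar>x\<bar>) powr (- (6 - real n)))"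
  proof (rule AE_I2)
    fix x :: real
    have "\<bar>x\<bar> ^ n \<le> (1 + \<bar>x\<bar>) powr real n"
      by (simp add: powr_realpow power_mono)
    hence "\<bar>x\<bar> ^ n * \<bar>\<psi> x\<bar> \<le> (1 + \<bar>x\<bar>) powr real n * (M * (1 + \<bar>x\<bar>) powr (-6))"
      using Mb[of x] by (intro mult_mono) auto
    also have "\<dots> = M * (1 + \<bar>x\<bar>) powr (- (6 - real n))"
      by (simp add: powr_add[symmetric] algebra_simps)
    finally show "norm (\<bar>x\<bar> ^ n * \<bar>\<psi> x\<bar>) \<le> norm (M * (1 + \<bar>x\<bar>) powr (- (6 - real n)))"
      using Mpos by simp
  qed
qed

lemma psi_meas2: "\<psi> \<in> borel_measurable lborel"
  using psi_meas by simp

lemma psi_int: "integrable lborel \<psi>"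
proof -
  have "integrable lborel (\<lambda>x. \<bar>\<psi> x\<bar>)" using pow_int[of 0] by simp
  thus ?thesis using integrable_abs_iff[OF psi_meas2] by blast
qed

lemma xpsi_int: "integrable lborel (\<lambda>x. x * \<psi> x)"
proof -
  have "integrable lborel (\<lambda>x. \<bar>x * \<psi> x\<bar>)" using pow_int[of 1] by (simp add: abs_mult)
  moreover have "(\<lambda>x. x * \<psi> x) \<in> borel_measurable lborel"
    using psi_meas2 by (intro borel_measurable_times) auto
  ultimately show ?thesis using integrable_abs_iff by blast
qed

lemma mom0: "(LINT x|lborel. \<psi> x) = 0"
proof -
  obtain a where a: "a > 0" "\<And>\<xi>. \<bar>\<xi>\<bar> < a \<Longrightarrow> fourier \<psi> \<xi> = 0" using fourier_zero by auto
  have "0 = fourier \<psi> 0" using a by simp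
  also have "\<dots> = (CLINT x|lborel. complex_of_real (\<psi> x))" unfolding fourier_def by simp
  also have "\<dots> = complex_of_real (LINT x|lborel. \<psi> x)" by (rule integral_complex_of_real)
  finally show ?thesis by simp
qed

lemma sin_int: "(LINT x|lborel. \<psi> x * sin (\<xi> * x)) = 0" if "\<bar>\<xi>\<bar> < a" "\<And>\<xi>. \<bar>\<xi>\<bar> < a \<Longrightarrow> fourier \<psi> \<xi> = 0" for \<xi> a
proof -
  have ci: "complex_integrable lborel (\<lambda>x. complex_of_real (\<psi> x) * cis (- \<xi> * x))"
  proof (rule Bochner_Integration.integrable_bound[OF psi_int])
    show "(\<lambda>x. complex_of_real (\<psi> x) * cis (- \<xi> * x)) \<in> borel_measurable lborel"
      unfolding measurable_lborel2 by (intro borel_measurable_continuous_onI continuous_intros psi_con)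
    show "AE x in lborel. norm (complex_of_real (\<psi> x) * cis (- \<xi> * x)) \<le> norm (\<psi> x)"
      by (simp add: norm_mult)
  qed
  have "0 = Im (fourier \<psi> \<xi>)" using that by simp
  also have "\<dots> = (LINT x|lborel. Im (complex_of_real (\<psi> x) * cis (- \<xi> * x)))"
    unfolding fourier_def by (rule integral_Im[OF ci, symmetric])
  also have "\<dots> = (LINT x|lborel. - (\<psi> x * sin (\<xi> * x)))" by simp
  finally show ?thesis by simp
qed

lemma mom1: "(LINT x|lborel. x * \<psi> x) = 0"
proof -
  obtain a where a: "a > 0" "\<And>\<xi>. \<bar>\<xi>\<bar> < a \<Longrightarrow> fourier \<psi> \<xi> = 0" using fourier_zero by auto
  define h where "h = (\<lambda>n::nat. a / (real n + 2))"
  have hpos: "h n > 0" for n using a by (simp add: h_def)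
  have hlt: "h n < a" for n using a by (simp add: h_def field_simps add_pos_nonneg)
  have h0: "h \<longlonglongrightarrow> 0" unfolding h_def by real_asymp
  have lim: "(\<lambda>n. LINT x|lborel. \<psi> x * sin (h n * x) / h n) \<longlonglongrightarrow> (LINT x|lborel. x * \<psi> x)"
  proof (rule integral_dominated_convergence[where w = "\<lambda>x. \<bar>x\<bar> ^ 1 * \<bar>\<psi> x\<bar>"])
    show "(\<lambda>x. x * \<psi> x) \<in> borel_measurable lborel"
      unfolding measurable_lborel2 by (intro borel_measurable_continuous_onI continuous_intros psi_con)
    show "(\<lambda>x. \<psi> x * sin (h n * x) / h n) \<in> borel_measurable lborel" for n
      unfolding measurable_lborel2 using hpos[of n] by (intro borel_measurable_continuous_onI continuous_intros psi_con) auto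
    show "integrable lborel (\<lambda>x. \<bar>x\<bar> ^ 1 * \<bar>\<psi> x\<bar>)" by (rule pow_int) simp
    show "AE x in lborel. norm (\<psi> x * sin (h n * x) / h n) \<le> \<bar>x\<bar> ^ 1 * \<bar>\<psi> x\<bar>" for n
    proof (rule AE_I2)
      fix x
      have "\<bar>sin (h n * x)\<bar> \<le> \<bar>h n * x\<bar>" by (rule abs_sin_x_le_abs_x)
      hence "\<bar>sin (h n * x)\<bar> / h n \<le> \<bar>x\<bar>" using hpos[of n] by (simp add: abs_mult divide_le_eq mult.commute)
      thus "norm (\<psi> x * sin (h n * x) / h n) \<le> \<bar>x\<bar> ^ 1 * \<bar>\<psi> x\<bar>"
      proof -
        have "\<bar>\<psi> x\<bar> * (\<bar>sin (h n * x)\<bar> / h n) \<le> \<bar>\<psi> x\<bar> * \<bar>x\<bar>"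
          by (rule mult_left_mono) (use \<open>\<bar>sin (h n * x)\<bar> / h n \<le> \<bar>x\<bar>\<close> in auto)
        thus ?thesis using hpos[of n] by (simp add: abs_mult mult.commute)
      qed
    qed
    show "AE x in lborel. (\<lambda>n. \<psi> x * sin (h n * x) / h n) \<longlonglongrightarrow> x * \<psi> x"
    proof (rule AE_I2)
      fix x
      have d: "((\<lambda>y. sin (y * x)) has_real_derivative x) (at 0)"
        by (auto intro!: derivative_eq_intros)
      have "((\<lambda>y. (sin ((0 + y) * x) - sin (0 * x)) / y) \<longlongrightarrow> x) (at 0)"
        using d unfolding has_field_derivative_iff by simp
      hence l: "((\<lambda>y. sin (y * x) / y) \<longlongrightarrow> x) (at 0)" by simp
      have "filterlim h (at 0) sequentially"
        using h0 hpos by (auto simp: filterlim_at intro!: always_eventually) (metis less_irrefl)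
      from filterlim_compose[OF l this]
      have "(\<lambda>n. sin (h n * x) / h n) \<longlonglongrightarrow> x" by (simp add: o_def)
      hence "(\<lambda>n. \<psi> x * (sin (h n * x) / h n)) \<longlonglongrightarrow> \<psi> x * x" by (intro tendsto_mult tendsto_const)
      thus "(\<lambda>n. \<psi> x * sin (h n * x) / h n) \<longlonglongrightarrow> x * \<psi> x" by (simp add: mult.commute)
    qed
  qed
  have z: "(LINT x|lborel. \<psi> x * sin (h n * x) / h n) = 0" for n
  proof -
    have "(LINT x|lborel. \<psi> x * sin (h n * x) / h n) = (LINT x|lborel. \<psi> x * sin (h n * x)) / h n"
      by simp
    also have "\<dots> = 0" using sin_int[of "h n" a] hlt[of n] hpos[of n] a by simp
    finally show ?thesis .
  qed
  hence "(\<lambda>n. LINT x|lborel. \<psi> x * sin (h n * x) / h n) = (\<lambda>n. 0)" by (rule ext)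
  with lim have "(\<lambda>n. 0) \<longlonglongrightarrow> (LINT x|lborel. x * \<psi> x)" by simp
  from LIMSEQ_unique[OF tendsto_const this] show ?thesis by simp
qed


end
end

lemma kloc:
  fixes e t :: real assumes e: "-1 < e"
  shows "set_integrable lborel {t-1..t} (\<lambda>x. (t-x) powr e) \<and> (LINT x:{t-1..t}|lborel. (t-x) powr e) = 1/(e+1)"
proof -
  have h: "set_integrable lborel {0..1} (\<lambda>u. u powr e) \<and> (LINT u:{0..1}|lborel. u powr e) = 1/(e+1)"
    using hk2lb[of "\<lambda>u. u powr e" "{0..1}" "1 powr (e+1)/(e+1)"] has_integral_powr_from_0[OF e, of 1] by simp
  define g where "g = (\<lambda>x::real. indicator {t-1..t} x *\<^sub>R (t-x) powr e)"
  have eq: "(\<lambda>u. g (t + (-1) * u)) = (\<lambda>u. indicator {0..1} u *\<^sub>R u powr e)"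
    by (auto simp: g_def indicator_def fun_eq_iff)
  have "integrable lborel g"
    using h lborel_integrable_real_affine_iff[of "-1" g t] eq unfolding set_integrable_def by simp
  moreover have "integral\<^sup>L lborel g = 1/(e+1)"
    using lborel_integral_real_affine[of "-1" g t] eq h unfolding set_lebesgue_integral_def by simp
  ultimately show ?thesis unfolding set_integrable_def set_lebesgue_integral_def g_def by simp
qed

definition kern :: "real \<Rightarrow> real \<Rightarrow> real \<Rightarrow> real" where
  "kern e t x = (if x < t then (t - x) powr e else 0)"

lemma kern_meas[measurable]: "(\<lambda>x. kern e t x) \<in> borel_measurable borel"
  unfolding kern_def by measurable

lemma kern_nn: "0 \<le> kern e t x" by (simp add: kern_def)

lemma kern_bound:
  assumes e: "e < 0"
  shows "kern e t x \<le> indicator {t-1..t} x * (t-x) powr e + indicator {..t} x"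
proof (cases "x < t")
  case True
  show ?thesis
  proof (cases "t - x \<le> 1")
    case True
    with \<open>x < t\<close> show ?thesis by (simp add: kern_def indicator_def)
  next
    case False
    hence "(t-x) powr e \<le> (t-x) powr 0" using e by (intro powr_mono) auto
    hence "(t-x) powr e \<le> 1" using False by simp
    thus ?thesis using `x < t` False by (simp add: kern_def indicator_def)
  qed
qed (simp add: kern_def indicator_def)

lemma ksplit:
  fixes h :: "real \<Rightarrow> real"
  assumes e: "-1 < e" "e < 0" and hm[measurable]: "h \<in> borel_measurable borel"
    and nn: "\<And>x. 0 \<le> h x" and hi: "integrable lborel h"
    and hb: "\<And>x. x \<in> {t-1..t} \<Longrightarrow> h x \<le> S"
  shows "integrable lborel (\<lambda>x. kern e t x * h x) \<and>
         (LINT x|lborel. kern e t x * h x) \<le> S/(e+1) + (LINT x:{..t}|lborel. h x)"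
proof -
  have S: "0 \<le> S" using hb[of t] nn[of t] by simp
  define B where "B = (\<lambda>x. S * (indicator {t-1..t} x * (t-x) powr e) + indicator {..t} x * h x)"
  have k: "set_integrable lborel {t-1..t} (\<lambda>x. (t-x) powr e)" "(LINT x:{t-1..t}|lborel. (t-x) powr e) = 1/(e+1)"
    using kloc[OF e(1), of t] by auto
  have i1: "integrable lborel (\<lambda>x. indicator {t-1..t} x * (t-x) powr e)"
    using k(1) unfolding set_integrable_def by simp
  have i2: "integrable lborel (\<lambda>x. indicator {..t} x * h x)"
    using integrable_mult_indicator[of "{..t}" lborel h] hi by simp
  have iB: "integrable lborel B" unfolding B_def using i1 i2 by auto
  have pw: "kern e t x * h x \<le> B x" for x
  proof -
    have "kern e t x * h x \<le> (indicator {t-1..t} x * (t-x) powr e + indicator {..t} x) * h x"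
      using kern_bound[OF e(2), of t x] nn[of x] by (rule mult_right_mono)
    also have "\<dots> = indicator {t-1..t} x * (t-x) powr e * h x + indicator {..t} x * h x"
      by (simp add: algebra_simps)
    also have "indicator {t-1..t} x * (t-x) powr e * h x \<le> indicator {t-1..t} x * (t-x) powr e * S"
      using hb[of x] by (auto simp: indicator_def intro!: mult_left_mono)
    finally show ?thesis unfolding B_def by (simp add: algebra_simps)
  qed
  have ik: "integrable lborel (\<lambda>x. kern e t x * h x)"
  proof (rule Bochner_Integration.integrable_bound[OF iB])
    show "(\<lambda>x. kern e t x * h x) \<in> borel_measurable lborel"
      using hm kern_meas[of e t] by (simp add: borel_measurable_times)
    show "AE x in lborel. norm (kern e t x * h x) \<le> norm (B x)"
      using pw kern_nn nn by (intro AE_I2) (smt (verit, ccfv_threshold) real_norm_def zero_le_mult_iff)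
  qed
  have "(LINT x|lborel. kern e t x * h x) \<le> (LINT x|lborel. B x)"
    by (rule integral_mono[OF ik iB pw])
  also have "(LINT x|lborel. B x) = S * (1/(e+1)) + (LINT x:{..t}|lborel. h x)"
    unfolding B_def using i1 i2 k(2) by (simp add: set_lebesgue_integral_def)
  finally show ?thesis using ik by simp
qed

context fixes \<psi> :: "real \<Rightarrow> real" and M e :: real
  assumes mw: "meyer_type_wavelet \<psi>" and Mpos: "M > 0" and Mb: "\<And>x. \<bar>\<psi> x\<bar> \<le> M * (1 + \<bar>x\<bar>) powr (-6)"
    and e: "-1 < e" "e < 0"
begin

lemma absmeas: "(\<lambda>x. \<bar>\<psi> x\<bar>) \<in> borel_measurable borel"
  using psi_meas[OF mw] by (rule borel_measurable_abs)

lemma absint: "integrable lborel (\<lambda>x. \<bar>\<psi> x\<bar>)"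
  using pow_int[OF mw Mpos Mb, of 0] by simp

lemma Mb1: "\<bar>\<psi> x\<bar> \<le> M"
proof -
  have "(1 + \<bar>x\<bar>) powr (-6) \<le> (1 + \<bar>x\<bar>) powr 0" by (rule powr_mono) auto
  hence "(1 + \<bar>x\<bar>) powr (-6) \<le> 1" by (simp add: add_nonneg_eq_0_iff)
  hence "M * (1 + \<bar>x\<bar>) powr (-6) \<le> M * 1" using Mpos by (intro mult_left_mono) auto
  thus ?thesis using Mb[of x] by simp
qed

lemma J_int: "integrable lborel (\<lambda>x. kern e t x * \<bar>\<psi> x\<bar>)" "integrable lborel (\<lambda>x. kern e t x * \<psi> x)"
    "\<bar>LINT x|lborel. kern e t x * \<psi> x\<bar> \<le> (LINT x|lborel. kern e t x * \<bar>\<psi> x\<bar>)"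
proof -
  show i: "integrable lborel (\<lambda>x. kern e t x * \<bar>\<psi> x\<bar>)"
    using ksplit[OF e absmeas _ absint, of t M] Mb1 by auto
  show i2: "integrable lborel (\<lambda>x. kern e t x * \<psi> x)"
  proof (rule Bochner_Integration.integrable_bound[OF i])
    show "(\<lambda>x. kern e t x * \<psi> x) \<in> borel_measurable lborel"
      using kern_meas[of e t] psi_meas[OF mw] by (simp add: borel_measurable_times)
    show "AE x in lborel. norm (kern e t x * \<psi> x) \<le> norm (kern e t x * \<bar>\<psi> x\<bar>)"
      by (intro AE_I2) (simp add: abs_mult)
  qed
  have "\<bar>LINT x|lborel. kern e t x * \<psi> x\<bar> \<le> (LINT x|lborel. norm (kern e t x * \<psi> x))"
    using integral_norm_bound[of lborel "\<lambda>x. kern e t x * \<psi> x"] by simp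
  also have "\<dots> = (LINT x|lborel. kern e t x * \<bar>\<psi> x\<bar>)"
    by (rule Bochner_Integration.integral_cong) (auto simp: abs_mult kern_nn)
  finally show "\<bar>LINT x|lborel. kern e t x * \<psi> x\<bar> \<le> (LINT x|lborel. kern e t x * \<bar>\<psi> x\<bar>)" .
qed

lemma setint_le_full:
  fixes h :: "real \<Rightarrow> real"
  assumes "integrable lborel h" "\<And>x. 0 \<le> h x" "A \<in> sets borel"
  shows "(LINT x:A|lborel. h x) \<le> (LINT x|lborel. h x)"
  unfolding set_lebesgue_integral_def
  using assms by (intro integral_mono integrable_mult_indicator) (auto simp: indicator_def)

lemma J_all: "\<bar>LINT x|lborel. kern e t x * \<psi> x\<bar> \<le> M/(e+1) + (LINT x|lborel. \<bar>\<psi> x\<bar>)"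
proof -
  have "(LINT x|lborel. kern e t x * \<bar>\<psi> x\<bar>) \<le> M/(e+1) + (LINT x:{..t}|lborel. \<bar>\<psi> x\<bar>)"
    using ksplit[OF e absmeas _ absint, of t M] Mb1 by auto
  also have "(LINT x:{..t}|lborel. \<bar>\<psi> x\<bar>) \<le> (LINT x|lborel. \<bar>\<psi> x\<bar>)"
    by (rule setint_le_full[OF absint]) auto
  finally show ?thesis using J_int(3)[of t] by linarith
qed

lemma J_neg: assumes t: "t \<le> 0"
  shows "\<bar>LINT x|lborel. kern e t x * \<psi> x\<bar> \<le> M * (1+\<bar>t\<bar>) powr (-6) / (e+1) + M * (1+\<bar>t\<bar>) powr (-5) / 5"
proof -
  have hb: "\<bar>\<psi> x\<bar> \<le> M * (1+\<bar>t\<bar>) powr (-6)" if "x \<in> {t-1..t}" for x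
  proof -
    have "(1 + \<bar>x\<bar>) powr (-6) \<le> (1+\<bar>t\<bar>) powr (-6)" using that t by (intro powr_mono2') auto
    thus ?thesis using Mb[of x] Mpos by (smt (verit, best) mult_left_mono)
  qed
  have "(LINT x|lborel. kern e t x * \<bar>\<psi> x\<bar>) \<le> M * (1+\<bar>t\<bar>) powr (-6)/(e+1) + (LINT x:{..t}|lborel. \<bar>\<psi> x\<bar>)"
    using ksplit[OF e absmeas _ absint, of t "M * (1+\<bar>t\<bar>) powr (-6)"] hb by auto
  also have "(LINT x:{..t}|lborel. \<bar>\<psi> x\<bar>) \<le> (LINT x:{..t}|lborel. M * ((1+\<bar>t\<bar>) + 1*(t-x)) powr (-6))"
  proof (rule set_integral_mono)
    show "set_integrable lborel {..t} (\<lambda>x. \<bar>\<psi> x\<bar>)"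
      unfolding set_integrable_def using integrable_mult_indicator[OF _ absint, of "{..t}"] by simp
    show "set_integrable lborel {..t} (\<lambda>x. M * ((1+\<bar>t\<bar>) + 1*(t-x)) powr (-6))"
      using lb_down[of 1 "1+\<bar>t\<bar>" 6 t] by (auto intro: set_integrable_mult_right)
    fix x assume "x \<in> {..t}"
    hence "1 + \<bar>x\<bar> = (1+\<bar>t\<bar>) + 1*(t-x)" using t by auto
    thus "\<bar>\<psi> x\<bar> \<le> M * ((1+\<bar>t\<bar>) + 1*(t-x)) powr (-6)" using Mb[of x] by (simp add: add.assoc)
  qed
  also have "\<dots> = M * (1+\<bar>t\<bar>) powr (-5) / 5"
    using lb_down[of 1 "1+\<bar>t\<bar>" 6 t] by simp
  finally show ?thesis using J_int(3)[of t] by linarith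
qed

lemma J_pos: assumes t: "t \<ge> 2"
  shows "\<bar>LINT x|lborel. kern e t x * \<psi> x\<bar> \<le>
     e*(e-1)/2 * (t/2) powr (e-2) * (LINT x|lborel. \<bar>x\<bar>^2 * \<bar>\<psi> x\<bar>)
     + M * (1+t/2) powr (-6) / (e+1) + M * (1+t/2) powr (-5) / 5 + M * (1+t/2) powr (-4) / 4"
proof -
  define c2 where "c2 = e*(e-1)/2 * (t/2) powr (e-2)"
  have c2nn: "0 \<le> c2" unfolding c2_def using e by (simp add: mult_nonpos_nonpos)
  have pm[measurable]: "\<psi> \<in> borel_measurable borel" by (rule psi_meas[OF mw])
  have km[measurable]: "(\<lambda>x. kern e t x) \<in> borel_measurable borel" by (rule kern_meas)
  define P where "P = (\<lambda>x. t powr e * \<psi> x - e * t powr (e-1) * (x * \<psi> x))"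
  have iP: "integrable lborel P" unfolding P_def using psi_int[OF mw Mpos Mb] xpsi_int[OF mw Mpos Mb] by auto
  have P0: "(LINT x|lborel. P x) = 0"
    unfolding P_def using psi_int[OF mw Mpos Mb] xpsi_int[OF mw Mpos Mb] mom0[OF mw Mpos Mb] mom1[OF mw Mpos Mb]
    by simp
  have iK: "integrable lborel (\<lambda>x. kern e t x * \<psi> x)" by (rule J_int(2))
  have Jeq: "(LINT x|lborel. kern e t x * \<psi> x) = (LINT x|lborel. kern e t x * \<psi> x - P x)"
    using iK iP P0 by simp
  define h where "h = (\<lambda>x. indicator {t/2..} x * \<bar>\<psi> x\<bar>)"
  have hm[measurable]: "h \<in> borel_measurable borel" unfolding h_def by measurable
  have hi: "integrable lborel h" unfolding h_def using integrable_mult_indicator[OF _ absint, of "{t/2..}"] by simp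
  have hnn: "0 \<le> h x" for x unfolding h_def by simp
  define S where "S = M * (1+t/2) powr (-6)"
  have hb: "h x \<le> S" if "x \<in> {t-1..t}" for x
  proof (cases "x \<ge> t/2")
    case True
    have "(1 + \<bar>x\<bar>) powr (-6) \<le> (1+t/2) powr (-6)" using True t by (intro powr_mono2') auto
    hence "M * (1 + \<bar>x\<bar>) powr (-6) \<le> M * (1+t/2) powr (-6)" using Mpos by simp
    thus ?thesis using Mb[of x] True unfolding h_def S_def by simp
  next
    case False thus ?thesis unfolding h_def S_def using Mpos by simp
  qed
  have ks: "integrable lborel (\<lambda>x. kern e t x * h x)" "(LINT x|lborel. kern e t x * h x) \<le> S/(e+1) + (LINT x:{..t}|lborel. h x)"
    using ksplit[OF e hm hnn hi hb] by auto
  have tail: "(LINT x:{t/2..}|lborel. (1 + \<bar>x\<bar>)^k * \<bar>\<psi> x\<bar>) \<le> M * (1+t/2) powr (-(5 - real k)) / (5 - real k)"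
     "set_integrable lborel {t/2..} (\<lambda>x. (1 + \<bar>x\<bar>)^k * \<bar>\<psi> x\<bar>)" if k: "k \<le> 1" for k :: nat
  proof -
    have li: "set_integrable lborel {t/2..} (\<lambda>x. ((1+t/2) + 1*(x-t/2)) powr (-(6 - real k)))"
        "(LINT x:{t/2..}|lborel. ((1+t/2) + 1*(x-t/2)) powr (-(6 - real k))) = (1+t/2) powr (1-(6 - real k)) / (1*((6 - real k)-1))"
      using lb_up[of 1 "1+t/2" "6 - real k" "t/2"] k t by auto
    have pw: "(1 + \<bar>x\<bar>)^k * \<bar>\<psi> x\<bar> \<le> M * ((1+t/2) + 1*(x-t/2)) powr (-(6 - real k))" if "x \<in> {t/2..}" for x
    proof -
      have x: "1 + \<bar>x\<bar> = (1+t/2) + 1*(x-t/2)" using that t by auto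
      have "(1 + \<bar>x\<bar>)^k * \<bar>\<psi> x\<bar> \<le> (1 + \<bar>x\<bar>) powr real k * (M * (1 + \<bar>x\<bar>) powr (-6))"
        using Mb[of x] by (intro mult_mono) (auto simp: powr_realpow)
      also have "\<dots> = M * (1 + \<bar>x\<bar>) powr (-(6 - real k))" by (simp add: powr_add[symmetric] algebra_simps)
      finally show ?thesis unfolding x .
    qed
    have si: "set_integrable lborel {t/2..} (\<lambda>x. (1 + \<bar>x\<bar>)^k * \<bar>\<psi> x\<bar>)"
    proof -
      have "integrable lborel (\<lambda>x. (1 + \<bar>x\<bar>)^k * \<bar>\<psi> x\<bar>)"
      proof (cases k)
        case 0 thus ?thesis using absint by simp
      next
        case (Suc m) hence "k = 1" using k by simp
        thus ?thesis using absint pow_int[OF mw Mpos Mb, of 1] by (simp add: distrib_right)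
      qed
      hence "integrable lborel (\<lambda>x. indicator {t/2..} x *\<^sub>R ((1 + \<bar>x\<bar>)^k * \<bar>\<psi> x\<bar>))"
        by (intro integrable_mult_indicator) auto
      thus ?thesis unfolding set_integrable_def .
    qed
    have "(LINT x:{t/2..}|lborel. (1 + \<bar>x\<bar>)^k * \<bar>\<psi> x\<bar>) \<le> (LINT x:{t/2..}|lborel. M * ((1+t/2) + 1*(x-t/2)) powr (-(6 - real k)))"
      by (rule set_integral_mono[OF si _ pw]) (use li(1) in \<open>auto intro: set_integrable_mult_right\<close>)
    also have "\<dots> = M * (1+t/2) powr (-(5 - real k)) / (5 - real k)"
      using li(2) by (simp add: algebra_simps)
    finally show "(LINT x:{t/2..}|lborel. (1 + \<bar>x\<bar>)^k * \<bar>\<psi> x\<bar>) \<le> M * (1+t/2) powr (-(5 - real k)) / (5 - real k)" .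
    show "set_integrable lborel {t/2..} (\<lambda>x. (1 + \<bar>x\<bar>)^k * \<bar>\<psi> x\<bar>)" by (rule si)
  qed
  define Bd where "Bd = (\<lambda>x. indicator {..<t/2} x * (c2 * (\<bar>x\<bar>^2 * \<bar>\<psi> x\<bar>)) + kern e t x * h x
      + indicator {t/2..} x * ((1 + \<bar>x\<bar>)^1 * \<bar>\<psi> x\<bar>))"
  have pw: "\<bar>kern e t x * \<psi> x - P x\<bar> \<le> Bd x" for x
  proof (cases "x < t/2")
    case True
    have kx: "kern e t x = (t-x) powr e" using True t by (simp add: kern_def)
    have "kern e t x * \<psi> x - P x = \<psi> x * ((t-x) powr e - (t powr e - e * t powr (e-1) * x))"
      unfolding kx P_def by (simp add: algebra_simps)
    hence "\<bar>kern e t x * \<psi> x - P x\<bar> = \<bar>\<psi> x\<bar> * \<bar>(t-x) powr e - (t powr e - e * t powr (e-1) * x)\<bar>"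
      by (simp add: abs_mult)
    also have "\<dots> \<le> \<bar>\<psi> x\<bar> * (c2 * x^2)"
      unfolding c2_def using taylor_bound[of e t x] e t True by (intro mult_left_mono) auto
    also have "\<dots> = indicator {..<t/2} x * (c2 * (\<bar>x\<bar>^2 * \<bar>\<psi> x\<bar>))" using True by simp
    also have "\<dots> \<le> Bd x" unfolding Bd_def h_def using True by simp
    finally show ?thesis .
  next
    case False
    have te: "t powr e \<le> 1" using t e powr_mono[of e 0 t] by simp
    have te1: "t powr (e-1) \<le> 1" using t e powr_mono[of "e-1" 0 t] by simp
    have "\<bar>P x\<bar> \<le> \<bar>t powr e * \<psi> x\<bar> + \<bar>e * t powr (e-1) * (x * \<psi> x)\<bar>"
      unfolding P_def by (rule abs_triangle_ineq4)
    also have "\<dots> = t powr e * \<bar>\<psi> x\<bar> + \<bar>e\<bar> * t powr (e-1) * (\<bar>x\<bar> * \<bar>\<psi> x\<bar>)"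
      by (simp add: abs_mult)
    also have "\<dots> \<le> 1 * \<bar>\<psi> x\<bar> + 1 * 1 * (\<bar>x\<bar> * \<bar>\<psi> x\<bar>)"
      using te te1 e by (intro add_mono mult_mono) auto
    finally have Pb: "\<bar>P x\<bar> \<le> (1 + \<bar>x\<bar>) * \<bar>\<psi> x\<bar>" by (simp add: algebra_simps)
    have "\<bar>kern e t x * \<psi> x - P x\<bar> \<le> kern e t x * \<bar>\<psi> x\<bar> + \<bar>P x\<bar>"
      using abs_triangle_ineq4[of "kern e t x * \<psi> x" "P x"] kern_nn[of e t x] by (simp add: abs_mult)
    also have "\<dots> \<le> Bd x" unfolding Bd_def h_def using False Pb by simp
    finally show ?thesis .
  qed
  have i1: "integrable lborel (\<lambda>x. indicator {..<t/2} x * (c2 * (\<bar>x\<bar>^2 * \<bar>\<psi> x\<bar>)))"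
  proof -
    have "integrable lborel (\<lambda>x. indicator {..<t/2} x *\<^sub>R (c2 * (\<bar>x\<bar>^2 * \<bar>\<psi> x\<bar>)))"
      using pow_int[OF mw Mpos Mb, of 2] by (intro integrable_mult_indicator) auto
    thus ?thesis by simp
  qed
  have i3: "integrable lborel (\<lambda>x. indicator {t/2..} x * ((1 + \<bar>x\<bar>)^1 * \<bar>\<psi> x\<bar>))"
    using tail(2)[of 1] unfolding set_integrable_def by simp
  have iB: "integrable lborel Bd" unfolding Bd_def using i1 ks(1) i3 by auto
  have iD: "integrable lborel (\<lambda>x. kern e t x * \<psi> x - P x)" using iK iP by auto
  have "\<bar>LINT x|lborel. kern e t x * \<psi> x\<bar> \<le> (LINT x|lborel. \<bar>kern e t x * \<psi> x - P x\<bar>)"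
    unfolding Jeq using integral_norm_bound[of lborel "\<lambda>x. kern e t x * \<psi> x - P x"] by simp
  also have "\<dots> \<le> (LINT x|lborel. Bd x)"
    by (rule integral_mono[OF _ iB pw]) (use iD in auto)
  also have "(LINT x|lborel. Bd x) = c2 * (LINT x|lborel. indicator {..<t/2} x * (\<bar>x\<bar>^2 * \<bar>\<psi> x\<bar>))
      + (LINT x|lborel. kern e t x * h x) + (LINT x:{t/2..}|lborel. (1 + \<bar>x\<bar>)^1 * \<bar>\<psi> x\<bar>)"
    unfolding Bd_def set_lebesgue_integral_def using i1 ks(1) i3 by (simp add: mult.left_commute)
  also have "\<dots> \<le> c2 * (LINT x|lborel. \<bar>x\<bar>^2 * \<bar>\<psi> x\<bar>) + (S/(e+1) + M * (1+t/2) powr (-(5 - real (0::nat))) / (5 - real (0::nat)))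
       + M * (1+t/2) powr (-(5 - real (1::nat))) / (5 - real (1::nat))"
  proof (intro add_mono mult_left_mono c2nn)
    show "(LINT x|lborel. indicator {..<t/2} x * (\<bar>x\<bar>^2 * \<bar>\<psi> x\<bar>)) \<le> (LINT x|lborel. \<bar>x\<bar>^2 * \<bar>\<psi> x\<bar>)"
      using setint_le_full[OF pow_int[OF mw Mpos Mb, of 2], of "{..<t/2}"] unfolding set_lebesgue_integral_def by simp
    show "(LINT x:{t/2..}|lborel. (1 + \<bar>x\<bar>)^1 * \<bar>\<psi> x\<bar>) \<le> M * (1+t/2) powr (-(5 - real (1::nat))) / (5 - real (1::nat))"
      by (rule tail(1)) simp
    have "(LINT x:{..t}|lborel. h x) \<le> (LINT x|lborel. h x)" by (rule setint_le_full[OF hi hnn]) simp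
    also have "(LINT x|lborel. h x) = (LINT x:{t/2..}|lborel. (1 + \<bar>x\<bar>)^0 * \<bar>\<psi> x\<bar>)"
      unfolding h_def set_lebesgue_integral_def by simp
    also have "\<dots> \<le> M * (1+t/2) powr (-(5 - real (0::nat))) / (5 - real (0::nat))" by (rule tail(1)) simp
    finally show "(LINT x|lborel. kern e t x * h x) \<le> S/(e+1) + M * (1+t/2) powr (-(5 - real (0::nat))) / (5 - real (0::nat))"
      using ks(2) by linarith
  qed
  finally show ?thesis unfolding c2_def S_def by simp
qed


lemma pw52: fixes u a :: real assumes "1 \<le> u" "a \<le> -5/2" shows "u powr a \<le> u powr (-5/2)"
  using assms by (intro powr_mono) auto

lemma pwsc: fixes u w c :: real assumes "0 < c" "0 < w" "c * w \<le> u"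
  shows "u powr (-5/2) \<le> c powr (-5/2) * w powr (-5/2)"
proof -
  have "u powr (-5/2) \<le> (c*w) powr (-5/2)" using assms by (intro powr_mono2') auto
  also have "\<dots> = c powr (-5/2) * w powr (-5/2)" using assms by (simp add: powr_mult)
  finally show ?thesis .
qed

lemma J_decay: assumes eh: "e \<le> -1/2"
  shows "\<exists>K>0. \<forall>t. \<bar>LINT x|lborel. kern e t x * \<psi> x\<bar> \<le> K * (1+\<bar>t\<bar>) powr (-5/2)"
proof -
  define Q2 where "Q2 = (LINT x|lborel. \<bar>x\<bar>^2 * \<bar>\<psi> x\<bar>)"
  have Q2: "0 \<le> Q2" unfolding Q2_def by simp
  define A0 where "A0 = M/(e+1) + (LINT x|lborel. \<bar>\<psi> x\<bar>)"
  have A0: "0 \<le> A0" unfolding A0_def using Mpos e by (intro add_nonneg_nonneg divide_nonneg_pos integral_nonneg_AE) auto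
  define K1 where "K1 = M/(e+1) + M/5"
  define K2 where "K2 = A0 * 3 powr (5/2)"
  define K3 where "K3 = e*(e-1)/2 * Q2 * 4 powr (5/2) + (M/(e+1) + M/5 + M/4) * 2 powr (5/2)"
  have e1: "0 < e + 1" using e by simp
  have "0 < M/(e+1)" using Mpos e1 by simp
  hence K1: "0 < K1" unfolding K1_def using Mpos by simp
  have K2: "0 \<le> K2" unfolding K2_def using A0 by simp
  have K3: "0 \<le> K3" unfolding K3_def using Mpos e Q2 by (intro add_nonneg_nonneg mult_nonneg_nonneg) (auto simp: mult_nonpos_nonpos)
  have main: "\<bar>LINT x|lborel. kern e t x * \<psi> x\<bar> \<le> (K1 + K2 + K3) * (1+\<bar>t\<bar>) powr (-5/2)" for t
  proof -
    define w where "w = (1+\<bar>t\<bar>) powr (-5/2)"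
    have w: "0 < w" unfolding w_def by simp
    consider "t \<le> 0" | "0 \<le> t" "t \<le> 2" | "2 \<le> t" by linarith
    hence "\<bar>LINT x|lborel. kern e t x * \<psi> x\<bar> \<le> K1 * w \<or> \<bar>LINT x|lborel. kern e t x * \<psi> x\<bar> \<le> K2 * w
        \<or> \<bar>LINT x|lborel. kern e t x * \<psi> x\<bar> \<le> K3 * w"
    proof cases
      case 1
      have a: "(1+\<bar>t\<bar>) powr (-6) \<le> w" "(1+\<bar>t\<bar>) powr (-5) \<le> w"
        unfolding w_def using pw52[of "1+\<bar>t\<bar>" "-6"] pw52[of "1+\<bar>t\<bar>" "-5"] by auto
      have "M * (1+\<bar>t\<bar>) powr (-6) / (e+1) + M * (1+\<bar>t\<bar>) powr (-5) / 5 \<le> M * w / (e+1) + M * w / 5"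
        using a Mpos e by (intro add_mono divide_right_mono mult_left_mono) auto
      also have "\<dots> = K1 * w" unfolding K1_def by (simp add: field_simps)
      finally show ?thesis using J_neg[OF 1] by auto
    next
      case 2
      have "3 powr (-5/2) \<le> w" unfolding w_def using 2 by (intro powr_mono2') auto
      hence "3 powr (5/2) * 3 powr (-5/2) \<le> 3 powr (5/2) * w" by (intro mult_left_mono) auto
      hence "1 \<le> 3 powr (5/2) * w" by (simp add: powr_add[symmetric])
      hence "A0 * 1 \<le> A0 * (3 powr (5/2) * w)" using A0 by (intro mult_left_mono) auto
      hence "A0 \<le> K2 * w" unfolding K2_def by (simp add: algebra_simps)
      thus ?thesis using J_all[of t] unfolding A0_def by auto
    next
      case 3
      have tt: "\<bar>t\<bar> = t" using 3 by simp
      have b1: "(t/2) powr (e-2) \<le> 4 powr (5/2) * w"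
      proof -
        have "(t/2) powr (e-2) \<le> (t/2) powr (-5/2)" using 3 eh by (intro pw52) auto
        also have "\<dots> \<le> (1/4) powr (-5/2) * (1+t) powr (-5/2)" using 3 by (intro pwsc) auto
        also have "(1/4::real) powr (-5/2) = 4 powr (5/2)" by (simp add: powr_minus_divide powr_divide)
        finally show ?thesis unfolding w_def tt .
      qed
      have b2: "(1+t/2) powr (-k) \<le> 2 powr (5/2) * w" if "k \<ge> 5/2" for k :: real
      proof -
        have "(1+t/2) powr (-k) \<le> (1+t/2) powr (-5/2)" using 3 that by (intro pw52) auto
        also have "\<dots> \<le> (1/2) powr (-5/2) * (1+t) powr (-5/2)" using 3 by (intro pwsc) auto
        also have "(1/2::real) powr (-5/2) = 2 powr (5/2)" by (simp add: powr_minus_divide powr_divide)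
        finally show ?thesis unfolding w_def tt .
      qed
      have c2: "0 \<le> e*(e-1)/2" using e by (simp add: mult_nonpos_nonpos)
      have "e*(e-1)/2 * (t/2) powr (e-2) * Q2 + M * (1+t/2) powr (-6) / (e+1) + M * (1+t/2) powr (-5) / 5 + M * (1+t/2) powr (-4) / 4
          \<le> e*(e-1)/2 * (4 powr (5/2) * w) * Q2 + M * (2 powr (5/2) * w) / (e+1) + M * (2 powr (5/2) * w) / 5 + M * (2 powr (5/2) * w) / 4"
        using b1 b2[of 6] b2[of 5] b2[of 4] c2 Q2 Mpos e
        by (intro add_mono divide_right_mono mult_left_mono mult_right_mono) auto
      also have "\<dots> = K3 * w" unfolding K3_def by (simp add: field_simps)
      finally show ?thesis using J_pos[OF 3] unfolding Q2_def by (auto simp: mult.commute mult.left_commute)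
    qed
    moreover have "K1 * w \<le> (K1+K2+K3) * w" "K2 * w \<le> (K1+K2+K3) * w" "K3 * w \<le> (K1+K2+K3) * w"
      using K1 K2 K3 w by (auto intro!: mult_right_mono)
    ultimately show ?thesis unfolding w_def by linarith
  qed
  thus ?thesis using K1 K2 K3 by (intro exI[of _ "K1+K2+K3"]) auto
qed

end

lemma psiH_eq: "psiH H \<psi> y = (1 / Gamma (H - 1/2)) * (LINT x|lborel. kern (H - 3/2) y x * \<psi> x)"
  unfolding psiH_def kern_def by (simp add: if_distrib cong: if_cong)

lemma psiH_meas:
  assumes pm: "\<psi> \<in> borel_measurable borel"
  shows "(\<lambda>y. psiH H \<psi> y) \<in> borel_measurable borel"
proof -
  have [measurable]: "\<psi> \<in> borel_measurable borel" by (rule pm)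
  have "(\<lambda>(y,x). kern (H - 3/2) y x * \<psi> x) \<in> borel_measurable (lborel \<Otimes>\<^sub>M lborel)"
    unfolding kern_def by measurable
  hence "(\<lambda>y. LINT x|lborel. kern (H - 3/2) y x * \<psi> x) \<in> borel_measurable lborel"
    by (rule lborel.borel_measurable_lebesgue_integral)
  hence "(\<lambda>y. (1 / Gamma (H - 1/2)) * (LINT x|lborel. kern (H - 3/2) y x * \<psi> x)) \<in> borel_measurable borel"
    by simp
  thus ?thesis unfolding psiH_eq .
qed

lemma psiH_decay:
  assumes mw: "meyer_type_wavelet \<psi>" and H: "1/2 < H" "H < 1"
  shows "\<exists>K>0. \<forall>y. \<bar>psiH H \<psi> y\<bar> \<le> K * (1+\<bar>y\<bar>) powr (-5/2)"
proof -
  obtain M where M: "M > 0" "\<And>x. \<bar>\<psi> x\<bar> \<le> M * (1 + \<bar>x\<bar>) powr (-6)" using psi_decay[OF mw] by auto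
  obtain K0 where K0: "K0 > 0" "\<And>t. \<bar>LINT x|lborel. kern (H - 3/2) t x * \<psi> x\<bar> \<le> K0 * (1+\<bar>t\<bar>) powr (-5/2)"
    using J_decay[OF mw M(1) M(2), of "H - 3/2"] H by auto
  define g where "g = \<bar>1 / Gamma (H - 1/2)\<bar>"
  have "\<bar>psiH H \<psi> y\<bar> \<le> (g * K0 + 1) * (1+\<bar>y\<bar>) powr (-5/2)" for y
  proof -
    have "\<bar>psiH H \<psi> y\<bar> = g * \<bar>LINT x|lborel. kern (H - 3/2) y x * \<psi> x\<bar>"
      unfolding psiH_eq g_def by (simp add: abs_mult)
    also have "\<dots> \<le> g * (K0 * (1+\<bar>y\<bar>) powr (-5/2))" unfolding g_def by (intro mult_left_mono K0(2)) auto
    also have "\<dots> \<le> (g * K0 + 1) * (1+\<bar>y\<bar>) powr (-5/2)" by (simp add: algebra_simps)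
    finally show ?thesis .
  qed
  moreover have "g * K0 + 1 > 0"
  proof -
    have "0 \<le> g * K0" unfolding g_def using K0 by simp
    thus ?thesis by simp
  qed
  ultimately show ?thesis by blast
qed

lemma prod_setint:
  fixes p1 p2 :: "real \<Rightarrow> real" and K a b :: real and k1 k2 :: int and S :: "real set"
  assumes p1m: "p1 \<in> borel_measurable borel" and p2m: "p2 \<in> borel_measurable borel"
    and K: "0 < K" and p1b: "\<And>y. \<bar>p1 y\<bar> \<le> K * (1+\<bar>y\<bar>) powr (-5/2)"
    and p2b: "\<And>y. \<bar>p2 y\<bar> \<le> K * (1+\<bar>y\<bar>) powr (-5/2)"
    and b: "b \<noteq> 0" and Sm: "S \<in> sets borel"
  shows "set_integrable lborel S (\<lambda>x. p1 (a*x - real_of_int k1) * p2 (b*x - real_of_int k2))"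
proof -
  have [measurable]: "p1 \<in> borel_measurable borel" "p2 \<in> borel_measurable borel" using p1m p2m by auto
  have p1K: "\<bar>p1 y\<bar> \<le> K" for y
  proof -
    have "(1+\<bar>y\<bar>) powr (-5/2) \<le> (1+\<bar>y\<bar>) powr 0" by (rule powr_mono) auto
    hence "(1+\<bar>y\<bar>) powr (-5/2) \<le> 1" by (simp add: add_nonneg_eq_0_iff)
    hence "K * (1+\<bar>y\<bar>) powr (-5/2) \<le> K * 1" using K by (intro mult_left_mono) auto
    thus ?thesis using p1b[of y] by simp
  qed
  have "integrable lborel (\<lambda>x. p1 (a*x - real_of_int k1) * p2 (b*x - real_of_int k2))"
  proof (rule Bochner_Integration.integrable_bound)
    show "integrable lborel (\<lambda>x. K * (K * (1 + \<bar>b*x - real_of_int k2\<bar>) powr (-5/2)))"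
      using lb_abs_affine[of "5/2" b "real_of_int k2"] b by simp
    show "(\<lambda>x. p1 (a*x - real_of_int k1) * p2 (b*x - real_of_int k2)) \<in> borel_measurable lborel" by measurable
    show "AE x in lborel. norm (p1 (a*x - real_of_int k1) * p2 (b*x - real_of_int k2)) \<le> norm (K * (K * (1 + \<bar>b*x - real_of_int k2\<bar>) powr (-5/2)))"
      using p1K p2b K by (intro AE_I2) (simp add: abs_mult mult_mono')
  qed
  hence "integrable lborel (\<lambda>x. indicator S x *\<^sub>R (p1 (a*x - real_of_int k1) * p2 (b*x - real_of_int k2)))"
    by (intro integrable_mult_indicator) (auto simp: Sm)
  thus ?thesis unfolding set_integrable_def .
qed

lemma infsum_wrap:
  fixes f :: "int \<Rightarrow> real"
  assumes nn: "\<And>k. 0 \<le> f k" and bd: "\<And>F. finite F \<Longrightarrow> sum f F \<le> B"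
  shows "f summable_on UNIV \<and> infsum f UNIV \<le> B"
proof -
  have s: "f summable_on UNIV"
    by (rule nonneg_bdd_above_summable_on) (use nn bd in \<open>auto simp: bdd_above_def\<close>)
  have "infsum f UNIV \<le> B" by (rule infsum_le_finite_sums[OF s]) (use bd in auto)
  with s show ?thesis by simp
qed

lemma main_bound:
  fixes p1 p2 :: "real \<Rightarrow> real" and K a b :: real and j1 j2 :: int and Z F :: "int set"
    and \<phi> :: "int \<Rightarrow> nat" and S :: "real set" and v :: "real \<Rightarrow> real" and I :: real
  assumes p1m: "p1 \<in> borel_measurable borel" and p2m: "p2 \<in> borel_measurable borel"
    and K: "0 < K" and p1b: "\<And>y. \<bar>p1 y\<bar> \<le> K * (1+\<bar>y\<bar>) powr (-5/2)"
    and p2b: "\<And>y. \<bar>p2 y\<bar> \<le> K * (1+\<bar>y\<bar>) powr (-5/2)"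
    and a: "0 < a" "a \<le> b" and b: "1 \<le> b"
    and Zf: "finite Z" and Zb: "\<And>k. k \<in> Z \<Longrightarrow> \<bar>real_of_int k\<bar> \<le> b"
    and inj: "inj_on \<phi> Z"
    and Sm: "S \<in> sets borel"
    and vnn: "\<And>x. x \<in> S \<Longrightarrow> 0 \<le> v x"
    and E: "\<And>x k. x \<in> S \<Longrightarrow> k \<in> Z \<Longrightarrow> v x + real (\<phi> k) \<le> \<bar>b*x - real_of_int k\<bar>"
    and xv: "\<And>x. x \<in> S \<Longrightarrow> 1 + \<bar>x\<bar> \<le> 2 * (1 + v x)"
    and vi: "set_integrable lborel S (\<lambda>x. (1 + v x) powr (-5/4))"
    and vI: "(LINT x:S|lborel. (1 + v x) powr (-5/4)) = I"
    and Ff: "finite F"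
  shows "(\<Sum>k1\<in>F. \<Sum>k2\<in>Z. sqrt (ln (3 + \<bar>real_of_int j1\<bar> + \<bar>real_of_int k1\<bar>)) * sqrt (ln (3 + \<bar>real_of_int j2\<bar> + \<bar>real_of_int k2\<bar>)) *
            \<bar>LINT x:S|lborel. p1 (a*x - real_of_int k1) * p2 (b*x - real_of_int k2)\<bar>)
         \<le> 12 * K * K * 2 powr (1/4) * sqrt (ln (3 + \<bar>real_of_int j1\<bar> + b)) * sqrt (ln (3 + \<bar>real_of_int j2\<bar> + b)) * I"
proof -
  define W1 where "W1 = (\<lambda>k1::int. sqrt (ln (3 + \<bar>real_of_int j1\<bar> + \<bar>real_of_int k1\<bar>)))"
  define W2 where "W2 = (\<lambda>k2::int. sqrt (ln (3 + \<bar>real_of_int j2\<bar> + \<bar>real_of_int k2\<bar>)))"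
  define sL1 where "sL1 = sqrt (ln (3 + \<bar>real_of_int j1\<bar> + b))"
  define sL2 where "sL2 = sqrt (ln (3 + \<bar>real_of_int j2\<bar> + b))"
  have W1nn: "0 \<le> W1 k" for k unfolding W1_def by simp
  have W2nn: "0 \<le> W2 k" for k unfolding W2_def by simp
  have sL1: "0 \<le> sL1" unfolding sL1_def using b by simp
  have sL2: "0 \<le> sL2" unfolding sL2_def using b by simp
  have [measurable]: "p1 \<in> borel_measurable borel" "p2 \<in> borel_measurable borel" using p1m p2m by auto
  define f where "f = (\<lambda>k1 k2 x. p1 (a*x - real_of_int k1) * p2 (b*x - real_of_int k2))"
  have fm[measurable]: "f k1 k2 \<in> borel_measurable borel" for k1 k2 unfolding f_def by measurable
  have p1K: "\<bar>p1 y\<bar> \<le> K" for y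
  proof -
    have "(1+\<bar>y\<bar>) powr (-5/2) \<le> (1+\<bar>y\<bar>) powr 0" by (rule powr_mono) auto
    hence "(1+\<bar>y\<bar>) powr (-5/2) \<le> 1" by (simp add: add_nonneg_eq_0_iff)
    hence "K * (1+\<bar>y\<bar>) powr (-5/2) \<le> K * 1" using K by (intro mult_left_mono) auto
    thus ?thesis using p1b[of y] by simp
  qed
  have fint: "integrable lborel (\<lambda>x. \<bar>f k1 k2 x\<bar>)" for k1 k2
  proof (rule Bochner_Integration.integrable_bound)
    show "integrable lborel (\<lambda>x. K * (K * (1 + \<bar>b*x - real_of_int k2\<bar>) powr (-5/2)))"
      using lb_abs_affine[of "5/2" b "real_of_int k2"] b by simp
    show "(\<lambda>x. \<bar>f k1 k2 x\<bar>) \<in> borel_measurable lborel" by measurable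
    show "AE x in lborel. norm \<bar>f k1 k2 x\<bar> \<le> norm (K * (K * (1 + \<bar>b*x - real_of_int k2\<bar>) powr (-5/2)))"
      using p1K p2b K unfolding f_def by (intro AE_I2) (simp add: abs_mult mult_mono')
  qed
  have fsint: "set_integrable lborel S (f k1 k2)" for k1 k2
  proof -
    have "integrable lborel (f k1 k2)" using fint[of k1 k2] integrable_abs_iff[of "f k1 k2" lborel] by simp
    hence "integrable lborel (\<lambda>x. indicator S x *\<^sub>R f k1 k2 x)" by (intro integrable_mult_indicator) (auto simp: Sm)
    thus ?thesis unfolding set_integrable_def .
  qed
  define g where "g = (\<lambda>x. (\<Sum>k1\<in>F. W1 k1 * \<bar>p1 (a*x - real_of_int k1)\<bar>) * (\<Sum>k2\<in>Z. W2 k2 * \<bar>p2 (b*x - real_of_int k2)\<bar>))"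
  have step1: "(\<Sum>k1\<in>F. \<Sum>k2\<in>Z. W1 k1 * W2 k2 * \<bar>LINT x:S|lborel. f k1 k2 x\<bar>)
     \<le> (\<Sum>k1\<in>F. \<Sum>k2\<in>Z. W1 k1 * W2 k2 * (LINT x:S|lborel. \<bar>f k1 k2 x\<bar>))"
  proof (intro sum_mono mult_left_mono)
    fix k1 k2
    show "\<bar>LINT x:S|lborel. f k1 k2 x\<bar> \<le> (LINT x:S|lborel. \<bar>f k1 k2 x\<bar>)"
      using set_integral_norm_bound[OF fsint[of k1 k2]] by simp
    show "0 \<le> W1 k1 * W2 k2" using W1nn W2nn by simp
  qed
  have step2: "(\<Sum>k1\<in>F. \<Sum>k2\<in>Z. W1 k1 * W2 k2 * (LINT x:S|lborel. \<bar>f k1 k2 x\<bar>)) = (LINT x:S|lborel. g x)"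
  proof -
    have ii: "integrable lborel (\<lambda>x. indicator S x * (W1 k1 * W2 k2 * \<bar>f k1 k2 x\<bar>))" for k1 k2
    proof -
      have "integrable lborel (\<lambda>x. indicator S x *\<^sub>R (W1 k1 * W2 k2 * \<bar>f k1 k2 x\<bar>))"
        using fint[of k1 k2] by (intro integrable_mult_indicator) (auto simp: Sm)
      thus ?thesis by simp
    qed
    have "(\<Sum>k1\<in>F. \<Sum>k2\<in>Z. W1 k1 * W2 k2 * (LINT x:S|lborel. \<bar>f k1 k2 x\<bar>))
        = (\<Sum>k1\<in>F. \<Sum>k2\<in>Z. (LINT x|lborel. indicator S x * (W1 k1 * W2 k2 * \<bar>f k1 k2 x\<bar>)))"
      unfolding set_lebesgue_integral_def by (simp add: algebra_simps)
    also have "\<dots> = (\<Sum>k1\<in>F. (LINT x|lborel. (\<Sum>k2\<in>Z. indicator S x * (W1 k1 * W2 k2 * \<bar>f k1 k2 x\<bar>))))"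
      using ii by (simp add: Bochner_Integration.integral_sum)
    also have "\<dots> = (LINT x|lborel. (\<Sum>k1\<in>F. \<Sum>k2\<in>Z. indicator S x * (W1 k1 * W2 k2 * \<bar>f k1 k2 x\<bar>)))"
    proof -
      have "integrable lborel (\<lambda>x. \<Sum>k2\<in>Z. indicator S x * (W1 k1 * W2 k2 * \<bar>f k1 k2 x\<bar>))" for k1
        using ii by (intro Bochner_Integration.integrable_sum) auto
      thus ?thesis by (simp add: Bochner_Integration.integral_sum)
    qed
    also have "\<dots> = (LINT x:S|lborel. g x)"
      unfolding set_lebesgue_integral_def g_def f_def
      by (intro Bochner_Integration.integral_cong refl)
         (simp add: sum_product sum_distrib_left abs_mult algebra_simps, rule sum.swap)
    finally show ?thesis .
  qed
  define Cst where "Cst = 12 * K * K * 2 powr (1/4) * sL1 * sL2"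
  have pwb: "g x \<le> Cst * (1 + v x) powr (-5/4)" if x: "x \<in> S" for x
  proof -
    have v: "0 \<le> v x" using vnn[OF x] .
    have A: "(\<Sum>k1\<in>F. W1 k1 * \<bar>p1 (a*x - real_of_int k1)\<bar>) \<le> 2 * sL1 * (1+\<bar>x\<bar>) powr (1/4) * K * (18/5)"
    proof -
      have "(\<Sum>k1\<in>F. W1 k1 * \<bar>p1 (a*x - real_of_int k1)\<bar>)
          \<le> (\<Sum>k1\<in>F. (2 * sL1 * (1+\<bar>x\<bar>) powr (1/4) * (1 + \<bar>a*x - real_of_int k1\<bar>) powr (1/4)) * (K * (1+\<bar>a*x - real_of_int k1\<bar>) powr (-5/2)))"
        unfolding W1_def sL1_def
        using weight_bound[OF a b, where J="\<bar>real_of_int j1\<bar>"] p1b sL1[unfolded sL1_def]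
        by (intro sum_mono mult_mono) auto
      also have "\<dots> = 2 * sL1 * (1+\<bar>x\<bar>) powr (1/4) * K * (\<Sum>k1\<in>F. (1 + \<bar>a*x - real_of_int k1\<bar>) powr (-(9/4)))"
        by (simp add: sum_distrib_left powr_add[symmetric] algebra_simps)
      also have "\<dots> \<le> 2 * sL1 * (1+\<bar>x\<bar>) powr (1/4) * K * (2 * ((9/4)/(9/4-1)))"
        using sum_int_bound[OF Ff, of "9/4" "a*x"] sL1 K by (intro mult_left_mono) auto
      finally show ?thesis by simp
    qed
    have B: "(\<Sum>k2\<in>Z. W2 k2 * \<bar>p2 (b*x - real_of_int k2)\<bar>) \<le> sL2 * K * (5/3) * (1 + v x) powr (-(3/2))"
    proof -
      have "(\<Sum>k2\<in>Z. W2 k2 * \<bar>p2 (b*x - real_of_int k2)\<bar>) \<le> (\<Sum>k2\<in>Z. sL2 * (K * (1 + \<bar>b*x - real_of_int k2\<bar>) powr (-(5/2))))"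
      proof (intro sum_mono mult_mono)
        fix k assume k: "k \<in> Z"
        show "W2 k \<le> sL2" unfolding W2_def sL2_def using Zb[OF k] by simp
        show "\<bar>p2 (b*x - real_of_int k)\<bar> \<le> K * (1 + \<bar>b*x - real_of_int k\<bar>) powr (-(5/2))" using p2b by simp
      qed (auto simp: sL2)
      also have "\<dots> = sL2 * K * (\<Sum>k2\<in>Z. (1 + \<bar>b*x - real_of_int k2\<bar>) powr (-(5/2)))"
        by (simp add: sum_distrib_left algebra_simps)
      also have "\<dots> \<le> sL2 * K * ((5/2)/(5/2-1) * (1 + v x) powr (1-5/2))"
        using sum_inj_bound[OF Zf inj, of "5/2" "v x" "\<lambda>k. \<bar>b*x - real_of_int k\<bar>"] v E[OF x] sL2 K
        by (intro mult_left_mono) auto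
      finally show ?thesis by simp
    qed
    have xb: "(1+\<bar>x\<bar>) powr (1/4) \<le> 2 powr (1/4) * (1 + v x) powr (1/4)"
    proof -
      have "(1+\<bar>x\<bar>) powr (1/4) \<le> (2 * (1 + v x)) powr (1/4)" using xv[OF x] by (intro powr_mono2) auto
      moreover have "(2 * (1 + v x)) powr (1/4) = 2 powr (1/4) * (1 + v x) powr (1/4)"
        using v powr_mult[of 2 "1 + v x" "1/4"] by simp
      ultimately show ?thesis by simp
    qed
    have Ann: "0 \<le> (\<Sum>k1\<in>F. W1 k1 * \<bar>p1 (a*x - real_of_int k1)\<bar>)" using W1nn by (intro sum_nonneg) auto
    have Bnn: "0 \<le> (\<Sum>k2\<in>Z. W2 k2 * \<bar>p2 (b*x - real_of_int k2)\<bar>)" using W2nn by (intro sum_nonneg) auto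
    have "g x \<le> (2 * sL1 * (1+\<bar>x\<bar>) powr (1/4) * K * (18/5)) * (sL2 * K * (5/3) * (1 + v x) powr (-(3/2)))"
      unfolding g_def using A B Ann Bnn by (intro mult_mono) auto
    also have "\<dots> \<le> (2 * sL1 * (2 powr (1/4) * (1 + v x) powr (1/4)) * K * (18/5)) * (sL2 * K * (5/3) * (1 + v x) powr (-(3/2)))"
      using xb sL1 sL2 K by (intro mult_right_mono mult_left_mono) auto
    also have "\<dots> = Cst * ((1 + v x) powr (1/4) * (1 + v x) powr (-(3/2)))"
      unfolding Cst_def by (simp add: algebra_simps)
    also have "(1 + v x) powr (1/4) * (1 + v x) powr (-(3/2)) = (1 + v x) powr (-5/4)"
      using v by (simp add: powr_add[symmetric])
    finally show ?thesis .
  qed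
  have gsi: "set_integrable lborel S g"
  proof -
    have "integrable lborel (\<lambda>x. indicator S x * (\<Sum>k1\<in>F. \<Sum>k2\<in>Z. W1 k1 * W2 k2 * \<bar>f k1 k2 x\<bar>))"
    proof -
      have "integrable lborel (\<lambda>x. indicator S x *\<^sub>R (\<Sum>k1\<in>F. \<Sum>k2\<in>Z. W1 k1 * W2 k2 * \<bar>f k1 k2 x\<bar>))"
        using fint by (intro integrable_mult_indicator) (auto simp: Sm)
      thus ?thesis by simp
    qed
    moreover have "(\<lambda>x. indicator S x * (\<Sum>k1\<in>F. \<Sum>k2\<in>Z. W1 k1 * W2 k2 * \<bar>f k1 k2 x\<bar>)) = (\<lambda>x. indicator S x *\<^sub>R g x)"
      unfolding g_def f_def by (simp add: sum_product sum_distrib_left abs_mult algebra_simps, rule ext, rule sum.swap)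
    ultimately show ?thesis unfolding set_integrable_def by simp
  qed
  have "(LINT x:S|lborel. g x) \<le> (LINT x:S|lborel. Cst * (1 + v x) powr (-5/4))"
    by (rule set_integral_mono[OF gsi _ pwb]) (use vi in \<open>auto intro: set_integrable_mult_right\<close>)
  also have "\<dots> = Cst * I" using vI by simp
  finally have "(LINT x:S|lborel. g x) \<le> Cst * I" .
  with step1 step2 show ?thesis unfolding W1_def W2_def f_def Cst_def sL1_def sL2_def by (simp add: mult.assoc)
qed

theorem mainTheorem15:
  fixes H1 H2 :: real and \<psi> :: "real \<Rightarrow> real"
  assumes "1/2 < H1" "H1 < 1" "1/2 < H2" "H2 < 1" "H1 + H2 > 3/2"
    and "meyer_type_wavelet \<psi>"
  shows "\<exists>C>0. \<forall>t s :: real. \<forall>j1 j2 :: int.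
     t \<in> {0<..<1} \<and> s \<in> {0<..<1} \<and> j1 \<le> j2 \<and> 0 \<le> j2 \<longrightarrow>
     (let B = C * sqrt (ln (3 + \<bar>real_of_int j1\<bar> + 2 powr real_of_int j2))
                * sqrt (ln (3 + \<bar>real_of_int j2\<bar> + 2 powr real_of_int j2))
                * 2 powr (- real_of_int j2)
      in (\<forall>k1 k2. set_integrable lborel {..min s t} (prodH H1 H2 \<psi> j1 j2 k1 k2)
                 \<and> set_integrable lborel {max s t..} (prodH H1 H2 \<psi> j1 j2 k1 k2)) \<and>
         (\<lambda>k1. \<Sum>k2\<in>Zset j2 t s. Lweight j1 j2 k1 k2 *
              \<bar>LINT x:{..min s t}|lborel. prodH H1 H2 \<psi> j1 j2 k1 k2 x\<bar>) summable_on UNIV \<and>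
         (\<Sum>\<^sub>\<infinity>k1. \<Sum>k2\<in>Zset j2 t s. Lweight j1 j2 k1 k2 *
              \<bar>LINT x:{..min s t}|lborel. prodH H1 H2 \<psi> j1 j2 k1 k2 x\<bar>) \<le> B \<and>
         (\<lambda>k1. \<Sum>k2\<in>Zset j2 t s. Lweight j1 j2 k1 k2 *
              \<bar>LINT x:{max s t..}|lborel. prodH H1 H2 \<psi> j1 j2 k1 k2 x\<bar>) summable_on UNIV \<and>
         (\<Sum>\<^sub>\<infinity>k1. \<Sum>k2\<in>Zset j2 t s. Lweight j1 j2 k1 k2 *
              \<bar>LINT x:{max s t..}|lborel. prodH H1 H2 \<psi> j1 j2 k1 k2 x\<bar>) \<le> B)"
proof -
  have mw: "meyer_type_wavelet \<psi>" by (rule assms(6))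
  obtain K1 where K1: "K1 > 0" "\<And>y. \<bar>psiH H1 \<psi> y\<bar> \<le> K1 * (1+\<bar>y\<bar>) powr (-5/2)"
    using psiH_decay[OF mw assms(1,2)] by auto
  obtain K2 where K2: "K2 > 0" "\<And>y. \<bar>psiH H2 \<psi> y\<bar> \<le> K2 * (1+\<bar>y\<bar>) powr (-5/2)"
    using psiH_decay[OF mw assms(3,4)] by auto
  define K where "K = max K1 K2"
  have K: "0 < K" unfolding K_def using K1 by simp
  have p1b: "\<bar>psiH H1 \<psi> y\<bar> \<le> K * (1+\<bar>y\<bar>) powr (-5/2)" for y
    using K1(2)[of y] mult_right_mono[of K1 K "(1+\<bar>y\<bar>) powr (-5/2)"] unfolding K_def by simp
  have p2b: "\<bar>psiH H2 \<psi> y\<bar> \<le> K * (1+\<bar>y\<bar>) powr (-5/2)" for y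
    using K2(2)[of y] mult_right_mono[of K2 K "(1+\<bar>y\<bar>) powr (-5/2)"] unfolding K_def by simp
  have p1m: "psiH H1 \<psi> \<in> borel_measurable borel" using psiH_meas[OF psi_meas[OF mw], of H1] by simp
  have p2m: "psiH H2 \<psi> \<in> borel_measurable borel" using psiH_meas[OF psi_meas[OF mw], of H2] by simp
  define C where "C = 48 * K * K * 2 powr (1/4)"
  have C: "C > 0" unfolding C_def using K by simp
  show ?thesis
  proof (rule exI[of _ C], intro conjI allI impI)
    show "0 < C" by (rule C)
    fix t s :: real and j1 j2 :: int
    assume hyp: "t \<in> {0<..<1} \<and> s \<in> {0<..<1} \<and> j1 \<le> j2 \<and> 0 \<le> j2"
    define b where "b = 2 powr real_of_int j2"
    define m where "m = min s t"
    define Mx where "Mx = max s t"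
    have m: "0 < m" "m < 1" "Mx < 1" "0 < Mx" "m \<le> Mx" using hyp unfolding m_def Mx_def by auto
    have a: "0 < 2 powr real_of_int j1" "2 powr real_of_int j1 \<le> b" unfolding b_def using hyp by auto
    have b1: "1 \<le> b" unfolding b_def using hyp by (simp add: ge_one_powr_ge_zero)
    have bpos: "0 < b" using b1 by simp
    have binv: "2 powr (- real_of_int j2) = 1 / b" unfolding b_def by (simp add: powr_minus divide_inverse)
    have Zmem: "k \<in> Zset j2 t s \<longleftrightarrow> b * m \<le> real_of_int k \<and> real_of_int k \<le> b * Mx" for k
    proof -
      have "k \<in> Zset j2 t s \<longleftrightarrow> m \<le> real_of_int k / b \<and> real_of_int k / b \<le> Mx"
        unfolding Zset_def binv m_def Mx_def by (simp add: min.commute max.commute)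
      also have "\<dots> \<longleftrightarrow> b * m \<le> real_of_int k \<and> real_of_int k \<le> b * Mx"
        using bpos by (simp add: divide_simps mult.commute)
      finally show ?thesis .
    qed
    have Zb: "\<bar>real_of_int k\<bar> \<le> b" if "k \<in> Zset j2 t s" for k
    proof -
      have "b * m \<le> real_of_int k" "real_of_int k \<le> b * Mx" using that Zmem by auto
      moreover have "0 \<le> b * m" "b * Mx \<le> b" using m bpos by auto
      ultimately show ?thesis by linarith
    qed
    have Zf: "finite (Zset j2 t s)"
    proof (rule finite_subset)
      show "Zset j2 t s \<subseteq> {-\<lceil>b\<rceil>..\<lceil>b\<rceil>}"
      proof
        fix k assume "k \<in> Zset j2 t s"
        hence "\<bar>real_of_int k\<bar> \<le> b" by (rule Zb)
        hence "\<bar>k\<bar> \<le> \<lceil>b\<rceil>" by linarith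
        thus "k \<in> {-\<lceil>b\<rceil>..\<lceil>b\<rceil>}" by auto
      qed
    qed simp
    define sL1 where "sL1 = sqrt (ln (3 + \<bar>real_of_int j1\<bar> + b))"
    define sL2 where "sL2 = sqrt (ln (3 + \<bar>real_of_int j2\<bar> + b))"
    have lowF: "(\<Sum>k1\<in>F. \<Sum>k2\<in>Zset j2 t s. Lweight j1 j2 k1 k2 *
              \<bar>LINT x:{..min s t}|lborel. prodH H1 H2 \<psi> j1 j2 k1 k2 x\<bar>) \<le> 12 * K * K * 2 powr (1/4) * sL1 * sL2 * (4 / b)"
      if F: "finite F" for F
    proof -
      have vi: "set_integrable lborel {..m} (\<lambda>x. (1 + b*(m-x)) powr (-5/4))"
         "(LINT x:{..m}|lborel. (1 + b*(m-x)) powr (-5/4)) = 4 / b"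
        using lb_down[of b 1 "5/4" m] bpos by auto
      show ?thesis
        unfolding Lweight_def prodH_def m_def[symmetric] sL1_def sL2_def b_def[symmetric]
      proof (rule main_bound[OF p1m p2m K p1b p2b a b1 Zf, where \<phi> = "\<lambda>k. nat (k - \<lceil>b*m\<rceil>)" and v = "\<lambda>x. b*(m-x)", OF _ _ _ _ _ _ _ _ F])
        show "\<bar>real_of_int k\<bar> \<le> b" if "k \<in> Zset j2 t s" for k using Zb that .
        show "inj_on (\<lambda>k. nat (k - \<lceil>b*m\<rceil>)) (Zset j2 t s)"
        proof (rule inj_onI)
          fix k k' assume "k \<in> Zset j2 t s" "k' \<in> Zset j2 t s" "nat (k - \<lceil>b*m\<rceil>) = nat (k' - \<lceil>b*m\<rceil>)"
          moreover have "\<lceil>b*m\<rceil> \<le> k" "\<lceil>b*m\<rceil> \<le> k'" using calculation(1,2) Zmem by (auto simp: ceiling_le_iff)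
          ultimately show "k = k'" by simp
        qed
        show "{..m} \<in> sets borel" by simp
        show "0 \<le> b*(m-x)" if "x \<in> {..m}" for x using that bpos by simp
        show "b*(m-x) + real (nat (k - \<lceil>b*m\<rceil>)) \<le> \<bar>b*x - real_of_int k\<bar>" if "x \<in> {..m}" "k \<in> Zset j2 t s" for x k
        proof -
          have k: "b*m \<le> real_of_int k" using that(2) Zmem by auto
          hence "\<lceil>b*m\<rceil> \<le> k" by (simp add: ceiling_le_iff)
          hence "real (nat (k - \<lceil>b*m\<rceil>)) = real_of_int k - real_of_int \<lceil>b*m\<rceil>" by simp
          moreover have "b*m \<le> real_of_int \<lceil>b*m\<rceil>" by (rule le_of_int_ceiling)
          moreover have "b*x \<le> b*m" using that(1) bpos by simp
          ultimately show ?thesis using k by (simp add: algebra_simps)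
        qed
        show "1 + \<bar>x\<bar> \<le> 2 * (1 + b*(m-x))" if "x \<in> {..m}" for x
        proof -
          have x: "x \<le> m" using that by simp
          have h: "m - x \<le> b*(m-x)" using b1 x by (simp add: mult_le_cancel_right1)
          have "\<bar>x\<bar> \<le> 1 + (m - x)" using x m by (cases "0 \<le> x") auto
          moreover obtain V where "V = b*(m-x)" by blast
          ultimately show ?thesis using h x by simp
        qed
        show "set_integrable lborel {..m} (\<lambda>x. (1 + b*(m-x)) powr (-5/4))" by (rule vi(1))
        show "(LINT x:{..m}|lborel. (1 + b*(m-x)) powr (-5/4)) = 4/b" by (rule vi(2))
      qed
    qed
    have upF: "(\<Sum>k1\<in>F. \<Sum>k2\<in>Zset j2 t s. Lweight j1 j2 k1 k2 *
              \<bar>LINT x:{max s t..}|lborel. prodH H1 H2 \<psi> j1 j2 k1 k2 x\<bar>) \<le> 12 * K * K * 2 powr (1/4) * sL1 * sL2 * (4 / b)"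
      if F: "finite F" for F
    proof -
      have vi: "set_integrable lborel {Mx..} (\<lambda>x. (1 + b*(x-Mx)) powr (-5/4))"
         "(LINT x:{Mx..}|lborel. (1 + b*(x-Mx)) powr (-5/4)) = 4 / b"
        using lb_up[of b 1 "5/4" Mx] bpos by auto
      show ?thesis
        unfolding Lweight_def prodH_def Mx_def[symmetric] sL1_def sL2_def b_def[symmetric]
      proof (rule main_bound[OF p1m p2m K p1b p2b a b1 Zf, where \<phi> = "\<lambda>k. nat (\<lfloor>b*Mx\<rfloor> - k)" and v = "\<lambda>x. b*(x-Mx)", OF _ _ _ _ _ _ _ _ F])
        show "\<bar>real_of_int k\<bar> \<le> b" if "k \<in> Zset j2 t s" for k using Zb that .
        show "inj_on (\<lambda>k. nat (\<lfloor>b*Mx\<rfloor> - k)) (Zset j2 t s)"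
        proof (rule inj_onI)
          fix k k' assume "k \<in> Zset j2 t s" "k' \<in> Zset j2 t s" "nat (\<lfloor>b*Mx\<rfloor> - k) = nat (\<lfloor>b*Mx\<rfloor> - k')"
          moreover have "k \<le> \<lfloor>b*Mx\<rfloor>" "k' \<le> \<lfloor>b*Mx\<rfloor>" using calculation(1,2) Zmem by (auto simp: le_floor_iff)
          ultimately show "k = k'" by simp
        qed
        show "{Mx..} \<in> sets borel" by simp
        show "0 \<le> b*(x-Mx)" if "x \<in> {Mx..}" for x using that bpos by simp
        show "b*(x-Mx) + real (nat (\<lfloor>b*Mx\<rfloor> - k)) \<le> \<bar>b*x - real_of_int k\<bar>" if "x \<in> {Mx..}" "k \<in> Zset j2 t s" for x k
        proof -
          have k: "real_of_int k \<le> b*Mx" using that(2) Zmem by auto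
          hence "k \<le> \<lfloor>b*Mx\<rfloor>" by (simp add: le_floor_iff)
          hence "real (nat (\<lfloor>b*Mx\<rfloor> - k)) = real_of_int \<lfloor>b*Mx\<rfloor> - real_of_int k" by simp
          moreover have "real_of_int \<lfloor>b*Mx\<rfloor> \<le> b*Mx" by (rule of_int_floor_le)
          moreover have "b*Mx \<le> b*x" using that(1) bpos by simp
          ultimately show ?thesis using k by (simp add: algebra_simps)
        qed
        show "1 + \<bar>x\<bar> \<le> 2 * (1 + b*(x-Mx))" if "x \<in> {Mx..}" for x
        proof -
          have x: "Mx \<le> x" using that by simp
          have h: "x - Mx \<le> b*(x-Mx)" using b1 x by (simp add: mult_le_cancel_right1)
          have "\<bar>x\<bar> \<le> 1 + (x - Mx)" using x m by auto
          moreover obtain V where "V = b*(x-Mx)" by blast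
          ultimately show ?thesis using h x by simp
        qed
        show "set_integrable lborel {Mx..} (\<lambda>x. (1 + b*(x-Mx)) powr (-5/4))" by (rule vi(1))
        show "(LINT x:{Mx..}|lborel. (1 + b*(x-Mx)) powr (-5/4)) = 4/b" by (rule vi(2))
      qed
    qed
    have Beq: "12 * K * K * 2 powr (1/4) * sL1 * sL2 * (4 / b) =
        C * sqrt (ln (3 + \<bar>real_of_int j1\<bar> + 2 powr real_of_int j2))
          * sqrt (ln (3 + \<bar>real_of_int j2\<bar> + 2 powr real_of_int j2)) * 2 powr (- real_of_int j2)"
      unfolding C_def sL1_def sL2_def binv by (simp add: b_def)
    have nn: "0 \<le> Lweight j1 j2 k1 k2 * \<bar>y\<bar>" for k1 k2 y
      unfolding Lweight_def by simp
    have W1: "(\<lambda>k1. \<Sum>k2\<in>Zset j2 t s. Lweight j1 j2 k1 k2 *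
              \<bar>LINT x:{..min s t}|lborel. prodH H1 H2 \<psi> j1 j2 k1 k2 x\<bar>) summable_on UNIV \<and>
         (\<Sum>\<^sub>\<infinity>k1. \<Sum>k2\<in>Zset j2 t s. Lweight j1 j2 k1 k2 *
              \<bar>LINT x:{..min s t}|lborel. prodH H1 H2 \<psi> j1 j2 k1 k2 x\<bar>) \<le> 12 * K * K * 2 powr (1/4) * sL1 * sL2 * (4 / b)"
      by (rule infsum_wrap) (use nn lowF in \<open>auto intro: sum_nonneg\<close>)
    have W2: "(\<lambda>k1. \<Sum>k2\<in>Zset j2 t s. Lweight j1 j2 k1 k2 *
              \<bar>LINT x:{max s t..}|lborel. prodH H1 H2 \<psi> j1 j2 k1 k2 x\<bar>) summable_on UNIV \<and>
         (\<Sum>\<^sub>\<infinity>k1. \<Sum>k2\<in>Zset j2 t s. Lweight j1 j2 k1 k2 *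
              \<bar>LINT x:{max s t..}|lborel. prodH H1 H2 \<psi> j1 j2 k1 k2 x\<bar>) \<le> 12 * K * K * 2 powr (1/4) * sL1 * sL2 * (4 / b)"
      by (rule infsum_wrap) (use nn upF in \<open>auto intro: sum_nonneg\<close>)
    have SI: "set_integrable lborel {..min s t} (prodH H1 H2 \<psi> j1 j2 k1 k2) \<and>
              set_integrable lborel {max s t..} (prodH H1 H2 \<psi> j1 j2 k1 k2)" for k1 k2
      unfolding prodH_def
      using prod_setint[OF p1m p2m K p1b p2b, of "2 powr real_of_int j2" "{..min s t}" "2 powr real_of_int j1" k1 k2]
            prod_setint[OF p1m p2m K p1b p2b, of "2 powr real_of_int j2" "{max s t..}" "2 powr real_of_int j1" k1 k2]
      by simp
    show "let B = C * sqrt (ln (3 + \<bar>real_of_int j1\<bar> + 2 powr real_of_int j2))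
                * sqrt (ln (3 + \<bar>real_of_int j2\<bar> + 2 powr real_of_int j2))
                * 2 powr (- real_of_int j2)
      in (\<forall>k1 k2. set_integrable lborel {..min s t} (prodH H1 H2 \<psi> j1 j2 k1 k2)
                 \<and> set_integrable lborel {max s t..} (prodH H1 H2 \<psi> j1 j2 k1 k2)) \<and>
         (\<lambda>k1. \<Sum>k2\<in>Zset j2 t s. Lweight j1 j2 k1 k2 *
              \<bar>LINT x:{..min s t}|lborel. prodH H1 H2 \<psi> j1 j2 k1 k2 x\<bar>) summable_on UNIV \<and>
         (\<Sum>\<^sub>\<infinity>k1. \<Sum>k2\<in>Zset j2 t s. Lweight j1 j2 k1 k2 *
              \<bar>LINT x:{..min s t}|lborel. prodH H1 H2 \<psi> j1 j2 k1 k2 x\<bar>) \<le> B \<and>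
         (\<lambda>k1. \<Sum>k2\<in>Zset j2 t s. Lweight j1 j2 k1 k2 *
              \<bar>LINT x:{max s t..}|lborel. prodH H1 H2 \<psi> j1 j2 k1 k2 x\<bar>) summable_on UNIV \<and>
         (\<Sum>\<^sub>\<infinity>k1. \<Sum>k2\<in>Zset j2 t s. Lweight j1 j2 k1 k2 *
              \<bar>LINT x:{max s t..}|lborel. prodH H1 H2 \<psi> j1 j2 k1 k2 x\<bar>) \<le> B"
      unfolding Let_def using SI W1 W2 Beq by simp
  qed
qed

end
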